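(* Let $X_1,X_2$, $A,B,C,D$, $X$, $\mathcal{A}$, $M_1,M_2$ be as in the context (with arbitrary $L\ge0$), and assume that $A$ and $D$ are boundedly invertible. (a) If $A$ and $D$ are sectorial, then for each $\psi\in[\omega(A)\vee\omega(D),\pi)$ the following are equivalent: (1) $\mathcal{A}$ is an invertible sectorial operator of angle $\psi$; (2) for all $\phi>\psi$ and for one $j\in\{1,2\}$, $M_j(\lambda)^{-1}\in\mathscr{L}(X_j)$ for all $\lambda\in\complement\overline{\Sigma_\phi}\cup\{0\}$ and $\sup\{\|M_j(\lambda)^{-1}\|:\lambda\in\complement\overline{\Sigma_\phi}\}<\infty$. (b) If $A$ and $D$ are $\mathcal{R}$-sectorial, then for each $\psi\in[\omega_{\mathcal{R}}(A)\vee\omega_{\mathcal{R}}(D),\pi)$ the following are equivalent: (1) $\mathcal{A}$ is an invertible $\mathcal{R}$-sectorial operator of angle $\psi$; (2) for all $\phi>\psi$ and for one $j\in\{1,2\}$, $M_j(\lambda)^{-1}\in\mathscr{L}(X_j)$ for all $\lambda\in\complement\overline{\Sigma_\phi}\cup\{0\}$ and $\mathcal{R}(M_j(\lambda)^{-1}:\lambda\in\complement\overline{\Sigma_\phi})<\infty$.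
   Context: All Banach spaces are complex. For $\psi\in(0,\pi)$, $\Sigma_\psi=\{z\in\mathbb{C}\setminus\{0\}:|\arg z|<\psi\}$, $\complement\overline{\Sigma_\psi}=\mathbb{C}\setminus\overline{\Sigma_\psi}$. A linear operator $T$ on a Banach space $Y$ is sectorial if there is $\omega\in(0,\pi)$ with $\sigma(T)\subseteq\overline{\Sigma_\omega}$, $\overline{\mathsf{D}(T)}=\overline{\mathsf{R}(T)}=Y$ and $\sup_{\lambda\in\complement\overline{\Sigma_\omega}}\|\lambda(\lambda-T)^{-1}\|<\infty$; $\omega(T)$ is the infimum of such $\omega$. A family $\mathscr{J}\subseteq\mathscr{L}(E,F)$ is $\mathcal{R}$-bounded if there is $K$ with $\mathbb{E}\|\sum_{n=1}^m\varepsilon_nT_nx_n\|^2\le K^2\mathbb{E}\|\sum_{n=1}^m\varepsilon_nx_n\|^2$ for all $m$, $T_n\in\mathscr{J}$, $x_n\in E$ ($\varepsilon_n$ independent symmetric $\pm1$-valued random variables); the least $K$ is $\mathcal{R}(\mathscr{J})$. Sectorial $T$ is $\mathcal{R}$-sectorial if for some $\sigma\in(\omega(T),\pi)$, $\{\lambda(\lambda-T)^{-1}:\lambda\in\complement\overline{\Sigma_\sigma}\}$ is $\mathcal{R}$-bounded; $\omega_{\mathcal{R}}(T)$ is the infimum of such $\sigma$. "Of angle $\psi$" means $\omega(\cdot)\le\psi$, resp. $\omega_{\mathcal{R}}(\cdot)\le\psi$. Setting: $X_1,X_2$ Banach spaces; $A$ on $X_1$ and $D$ on $X_2$ closed densely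 defined; $B:\mathsf{D}(B)\subseteq X_2\to X_1$, $C:\mathsf{D}(C)\subseteq X_1\to X_2$ linear with $\mathsf{D}(D)\subseteq\mathsf{D}(B)$, $\mathsf{D}(A)\subseteq\mathsf{D}(C)$ and constants $c_A,c_D,L\ge0$ with $\|Cx\|\le c_A\|Ax\|+L\|x\|$ ($x\in\mathsf{D}(A)$), $\|By\|\le c_D\|Dy\|+L\|y\|$ ($y\in\mathsf{D}(D)$). $X=X_1\times X_2$, $\mathcal{A}=\begin{bmatrix}A&B\\C&D\end{bmatrix}$ with $\mathsf{D}(\mathcal{A})=\mathsf{D}(A)\times\mathsf{D}(D)$. For $\lambda\in\rho(A)\cap\rho(D)$: $M_1(\lambda)=I-B(\lambda-D)^{-1}C(\lambda-A)^{-1}$, $M_2(\lambda)=I-C(\lambda-A)^{-1}B(\lambda-D)^{-1}$. *)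

theory Defs
  imports "HOL-Analysis.Analysis"
begin

text \<open>The distribution has no class of complex vector spaces, so we introduce one:
a real vector space with a compatible complex scalar multiplication.\<close>

class cplx_vector = real_vector +
  fixes scaleC :: "complex \<Rightarrow> 'a \<Rightarrow> 'a" (infixr \<open>*\<^sub>C\<close> 75)
  assumes scaleC_add_right: "a *\<^sub>C (x + y) = a *\<^sub>C x + a *\<^sub>C y"
    and scaleC_add_left: "(a + b) *\<^sub>C x = a *\<^sub>C x + b *\<^sub>C x"
    and scaleC_scaleC: "a *\<^sub>C (b *\<^sub>C x) = (a * b) *\<^sub>C x"
    and scaleC_one: "1 *\<^sub>C x = x"
    and scaleR_scaleC: "scaleR r x = (complex_of_real r) *\<^sub>C x"

class cplx_normed_vector = cplx_vector + real_normed_vector +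
  assumes norm_scaleC: "norm (a *\<^sub>C x) = cmod a * norm x"

instantiation prod :: (cplx_vector, cplx_vector) cplx_vector
begin
definition scaleC_prod_def: "a *\<^sub>C x = (a *\<^sub>C fst x, a *\<^sub>C snd x)"
instance
  by standard (auto simp: scaleC_prod_def scaleC_add_right scaleC_add_left
      scaleC_scaleC scaleC_one scaleR_scaleC scaleR_prod_def)
end

instance prod :: (cplx_normed_vector, cplx_normed_vector) cplx_normed_vector
proof
  fix a :: complex and x :: "'a \<times> 'b"
  have "norm (a *\<^sub>C x) = sqrt ((cmod a * norm (fst x))\<^sup>2 + (cmod a * norm (snd x))\<^sup>2)"
    by (simp add: scaleC_prod_def norm_prod_def norm_scaleC)
  also have "\<dots> = cmod a * sqrt ((norm (fst x))\<^sup>2 + (norm (snd x))\<^sup>2)"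
    by (simp add: power_mult_distrib real_sqrt_mult distrib_left[symmetric])
  finally show "norm (a *\<^sub>C x) = cmod a * norm x"
    by (simp add: norm_prod_def)
qed

definition csubspace :: "'a::cplx_vector set \<Rightarrow> bool" where
  "csubspace S \<longleftrightarrow> 0 \<in> S \<and> (\<forall>x\<in>S. \<forall>y\<in>S. x + y \<in> S) \<and> (\<forall>c. \<forall>x\<in>S. c *\<^sub>C x \<in> S)"

definition lin_op :: "'a::cplx_vector set \<Rightarrow> ('a \<Rightarrow> 'b::cplx_vector) \<Rightarrow> bool" where
  "lin_op S T \<longleftrightarrow> csubspace S \<and> (\<forall>x\<in>S. \<forall>y\<in>S. T (x + y) = T x + T y)
      \<and> (\<forall>c. \<forall>x\<in>S. T (c *\<^sub>C x) = c *\<^sub>C T x)"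

definition closed_op :: "'a::{cplx_normed_vector} set \<Rightarrow> ('a \<Rightarrow> 'b::cplx_normed_vector) \<Rightarrow> bool" where
  "closed_op S T \<longleftrightarrow> lin_op S T \<and> closed {(x, T x) | x. x \<in> S}"

definition densely_defined :: "'a::cplx_normed_vector set \<Rightarrow> bool" where
  "densely_defined S \<longleftrightarrow> closure S = UNIV"

definition bdd_op :: "('a::cplx_normed_vector \<Rightarrow> 'b::cplx_normed_vector) \<Rightarrow> bool" where
  "bdd_op F \<longleftrightarrow> lin_op UNIV F \<and> (\<exists>K. \<forall>x. norm (F x) \<le> K * norm x)"

definition bdd_invertible :: "'a::cplx_normed_vector set \<Rightarrow> ('a \<Rightarrow> 'b::cplx_normed_vector) \<Rightarrow> bool" where
  "bdd_invertible S T \<longleftrightarrow> bij_betw T S UNIV \<and> bdd_op (inv_into S T)"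

definition resolvent_set :: "'a::cplx_normed_vector set \<Rightarrow> ('a \<Rightarrow> 'a) \<Rightarrow> complex set" where
  "resolvent_set S T = {z. bdd_invertible S (\<lambda>x. z *\<^sub>C x - T x)}"

definition spectrum_op :: "'a::cplx_normed_vector set \<Rightarrow> ('a \<Rightarrow> 'a) \<Rightarrow> complex set" where
  "spectrum_op S T = - resolvent_set S T"

definition resolvent :: "'a::cplx_normed_vector set \<Rightarrow> ('a \<Rightarrow> 'a) \<Rightarrow> complex \<Rightarrow> 'a \<Rightarrow> 'a" where
  "resolvent S T z = inv_into S (\<lambda>x. z *\<^sub>C x - T x)"

definition sector :: "real \<Rightarrow> complex set" where
  "sector \<psi> = {z. z \<noteq> 0 \<and> \<bar>Arg z\<bar> < \<psi>}"

definition csector :: "real \<Rightarrow> complex set" where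
  "csector \<psi> = - closure (sector \<psi>)"

definition sectorial_with :: "'a::cplx_normed_vector set \<Rightarrow> ('a \<Rightarrow> 'a) \<Rightarrow> real \<Rightarrow> bool" where
  "sectorial_with S T \<omega> \<longleftrightarrow> lin_op S T \<and> 0 < \<omega> \<and> \<omega> < pi
     \<and> spectrum_op S T \<subseteq> closure (sector \<omega>)
     \<and> closure S = UNIV \<and> closure (T ` S) = UNIV
     \<and> (\<exists>K. \<forall>z\<in>csector \<omega>. onorm (\<lambda>y. z *\<^sub>C resolvent S T z y) \<le> K)"

definition sectorial :: "'a::cplx_normed_vector set \<Rightarrow> ('a \<Rightarrow> 'a) \<Rightarrow> bool" where
  "sectorial S T \<longleftrightarrow> (\<exists>\<omega>. sectorial_with S T \<omega>)"

definition sect_angle :: "'a::cplx_normed_vector set \<Rightarrow> ('a \<Rightarrow> 'a) \<Rightarrow> real" where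
  "sect_angle S T = Inf {\<omega>. sectorial_with S T \<omega>}"

text \<open>Expectation of a function of m independent symmetric \<plusminus>1-valued random
  variables \<epsilon>_0..\<epsilon>_(m-1): the average over all 2^m sign patterns.\<close>
definition signs :: "nat \<Rightarrow> real list set" where
  "signs m = {es. length es = m \<and> set es \<subseteq> {-1, 1}}"

definition rad_exp :: "nat \<Rightarrow> (real list \<Rightarrow> real) \<Rightarrow> real" where
  "rad_exp m f = (\<Sum>es\<in>signs m. f es) / 2 ^ m"

definition R_bound :: "('a::cplx_normed_vector \<Rightarrow> 'b::cplx_normed_vector) set \<Rightarrow> real \<Rightarrow> bool" where
  "R_bound J K \<longleftrightarrow> (\<forall>m Ts xs. (\<forall>n<m. Ts n \<in> J) \<longrightarrow>
      rad_exp m (\<lambda>es. (norm (\<Sum>n<m. (es ! n) *\<^sub>R Ts n (xs n)))\<^sup>2)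
        \<le> K\<^sup>2 * rad_exp m (\<lambda>es. (norm (\<Sum>n<m. (es ! n) *\<^sub>R xs n))\<^sup>2))"

definition R_bounded :: "('a::cplx_normed_vector \<Rightarrow> 'b::cplx_normed_vector) set \<Rightarrow> bool" where
  "R_bounded J \<longleftrightarrow> (\<exists>K. R_bound J K)"

definition R_sectorial_with :: "'a::cplx_normed_vector set \<Rightarrow> ('a \<Rightarrow> 'a) \<Rightarrow> real \<Rightarrow> bool" where
  "R_sectorial_with S T \<sigma> \<longleftrightarrow> sectorial S T \<and> sect_angle S T < \<sigma> \<and> \<sigma> < pi
     \<and> R_bounded {(\<lambda>y. z *\<^sub>C resolvent S T z y) | z. z \<in> csector \<sigma>}"

definition R_sectorial :: "'a::cplx_normed_vector set \<Rightarrow> ('a \<Rightarrow> 'a) \<Rightarrow> bool" where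
  "R_sectorial S T \<longleftrightarrow> (\<exists>\<sigma>. R_sectorial_with S T \<sigma>)"

definition R_angle :: "'a::cplx_normed_vector set \<Rightarrow> ('a \<Rightarrow> 'a) \<Rightarrow> real" where
  "R_angle S T = Inf {\<sigma>. R_sectorial_with S T \<sigma>}"

definition block_op :: "('a \<Rightarrow> 'a) \<Rightarrow> ('b \<Rightarrow> 'a) \<Rightarrow> ('a \<Rightarrow> 'b) \<Rightarrow> ('b \<Rightarrow> 'b)
    \<Rightarrow> ('a::cplx_normed_vector \<times> 'b::cplx_normed_vector) \<Rightarrow> 'a \<times> 'b" where
  "block_op A B C D = (\<lambda>(x, y). (A x + B y, C x + D y))"

definition M1 :: "'a::cplx_normed_vector set \<Rightarrow> ('a \<Rightarrow> 'a) \<Rightarrow> ('b \<Rightarrow> 'a) \<Rightarrow> ('a \<Rightarrow> 'b) \<Rightarrow> 'b::cplx_normed_vector set \<Rightarrow> ('b \<Rightarrow> 'b)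
    \<Rightarrow> complex \<Rightarrow> 'a \<Rightarrow> 'a" where
  "M1 SA A B C SD D z = (\<lambda>x. x - B (resolvent SD D z (C (resolvent SA A z x))))"

definition M2 :: "'a::cplx_normed_vector set \<Rightarrow> ('a \<Rightarrow> 'a) \<Rightarrow> ('b \<Rightarrow> 'a) \<Rightarrow> ('a \<Rightarrow> 'b) \<Rightarrow> 'b::cplx_normed_vector set \<Rightarrow> ('b \<Rightarrow> 'b)
    \<Rightarrow> complex \<Rightarrow> 'b \<Rightarrow> 'b" where
  "M2 SA A B C SD D z = (\<lambda>y. y - C (resolvent SA A z (B (resolvent SD D z y))))"

end

theory Submission
  imports Defs
begin

lemma scaleC_zero_left[simp]: "(0::complex) *\<^sub>C x = (0::'a::cplx_vector)"
proof -
  have "(0::complex) *\<^sub>C x = (0 + 0) *\<^sub>C x" by simp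
  also have "\<dots> = 0 *\<^sub>C x + 0 *\<^sub>C x" by (rule scaleC_add_left)
  finally show ?thesis by simp
qed

lemma scaleC_of_real: "complex_of_real r *\<^sub>C x = r *\<^sub>R (x::'a::cplx_vector)"
  by (simp add: scaleR_scaleC)

lemma scaleC_zero_right[simp]: "a *\<^sub>C (0::'a::cplx_vector) = 0"
proof -
  have "a *\<^sub>C (0::'a) = a *\<^sub>C (0 + 0)" by simp
  also have "\<dots> = a *\<^sub>C 0 + a *\<^sub>C 0" by (rule scaleC_add_right)
  finally show ?thesis by simp
qed

lemma scaleC_minus_left: "(- a) *\<^sub>C x = - (a *\<^sub>C (x::'a::cplx_vector))"
proof -
  have "(- a) *\<^sub>C x + a *\<^sub>C x = 0" by (simp add: scaleC_add_left[symmetric])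
  then show ?thesis by (simp add: eq_neg_iff_add_eq_0)
qed

lemma scaleC_minus_right: "a *\<^sub>C (- x) = - (a *\<^sub>C (x::'a::cplx_vector))"
proof -
  have "a *\<^sub>C (- x) + a *\<^sub>C x = 0" by (simp add: scaleC_add_right[symmetric])
  then show ?thesis by (simp add: eq_neg_iff_add_eq_0)
qed

lemma scaleC_diff_right: "a *\<^sub>C (x - y) = a *\<^sub>C x - a *\<^sub>C (y::'a::cplx_vector)"
  unfolding diff_conv_add_uminus by (simp only: scaleC_add_right scaleC_minus_right)

lemma scaleC_diff_left: "(a - b) *\<^sub>C x = a *\<^sub>C x - b *\<^sub>C (x::'a::cplx_vector)"
  unfolding diff_conv_add_uminus by (simp only: scaleC_add_left scaleC_minus_left)

lemma scaleC_one_simp[simp]: "1 *\<^sub>C x = (x::'a::cplx_vector)"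
  by (rule scaleC_one)

lemma scaleC_neg_one: "(-1) *\<^sub>C x = - (x::'a::cplx_vector)"
  by (simp add: scaleC_minus_left)

lemma scaleC_fst: "fst (a *\<^sub>C p) = a *\<^sub>C fst p"
  by (simp add: scaleC_prod_def)
lemma scaleC_snd: "snd (a *\<^sub>C p) = a *\<^sub>C snd p"
  by (simp add: scaleC_prod_def)
lemma scaleC_Pair: "a *\<^sub>C (x, y) = (a *\<^sub>C x, a *\<^sub>C y)"
  by (simp add: scaleC_prod_def)

section \<open>Linear operators\<close>

lemma csubspace_diff: "csubspace S \<Longrightarrow> x \<in> S \<Longrightarrow> y \<in> S \<Longrightarrow> x - y \<in> S"
  unfolding csubspace_def
  by (metis diff_conv_add_uminus scaleC_neg_one)

lemma csubspace_UNIV[simp]: "csubspace UNIV"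
  by (simp add: csubspace_def)

lemma csubspace_Times: "csubspace S \<Longrightarrow> csubspace T \<Longrightarrow> csubspace (S \<times> T)"
  unfolding csubspace_def by (auto simp: scaleC_prod_def zero_prod_def)

lemma lin_op_add: "lin_op S T \<Longrightarrow> x \<in> S \<Longrightarrow> y \<in> S \<Longrightarrow> T (x + y) = T x + T y"
  by (simp add: lin_op_def)
lemma lin_op_scaleC: "lin_op S T \<Longrightarrow> x \<in> S \<Longrightarrow> T (c *\<^sub>C x) = c *\<^sub>C T x"
  by (simp add: lin_op_def)
lemma lin_op_sub: "lin_op S T \<Longrightarrow> csubspace S"
  by (simp add: lin_op_def)
lemma lin_op_zero: "lin_op S T \<Longrightarrow> T 0 = 0"
  using lin_op_scaleC[of S T 0 0] by (simp add: lin_op_def csubspace_def)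
lemma lin_op_neg: "lin_op S T \<Longrightarrow> x \<in> S \<Longrightarrow> T (- x) = - T x"
  using lin_op_scaleC[of S T x "-1"] by (simp add: scaleC_neg_one)
lemma lin_op_diff: "lin_op S T \<Longrightarrow> x \<in> S \<Longrightarrow> y \<in> S \<Longrightarrow> T (x - y) = T x - T y"
proof -
  assume a: "lin_op S T" "x \<in> S" "y \<in> S"
  have "(-1) *\<^sub>C y \<in> S" using lin_op_sub[OF a(1)] a(3) unfolding csubspace_def by blast
  then have my: "- y \<in> S" by (simp add: scaleC_neg_one)
  have "T (x - y) = T (x + (- y))" by simp
  also have "\<dots> = T x + T (- y)" using lin_op_add[OF a(1) a(2) my] .
  also have "\<dots> = T x - T y" using lin_op_neg[OF a(1) a(3)] by simp
  finally show ?thesis .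
qed
lemma lin_op_scaleR: "lin_op S T \<Longrightarrow> x \<in> S \<Longrightarrow> T (r *\<^sub>R x) = r *\<^sub>R T x"
  by (simp add: scaleR_scaleC lin_op_scaleC)

lemma lin_opI:
  assumes "csubspace S" "\<And>x y. x \<in> S \<Longrightarrow> y \<in> S \<Longrightarrow> T (x + y) = T x + T y"
    "\<And>c x. x \<in> S \<Longrightarrow> T (c *\<^sub>C x) = c *\<^sub>C T x"
  shows "lin_op S T"
  using assms by (simp add: lin_op_def)

lemma lin_op_linear: "lin_op UNIV T \<Longrightarrow> linear T"
  by (rule linearI) (auto simp: lin_op_add lin_op_scaleR)

lemma bdd_op_bl: "bdd_op F \<Longrightarrow> bounded_linear F"
  unfolding bdd_op_def bounded_linear_def bounded_linear_axioms_def
  using lin_op_linear by (metis mult.commute)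

lemma bdd_op_lin: "bdd_op F \<Longrightarrow> lin_op UNIV F"
  by (simp add: bdd_op_def)

lemma bdd_opI: "lin_op UNIV F \<Longrightarrow> (\<And>x. norm (F x) \<le> K * norm x) \<Longrightarrow> bdd_op F"
  unfolding bdd_op_def by blast

lemma bdd_opI2: "lin_op UNIV F \<Longrightarrow> bounded_linear F \<Longrightarrow> bdd_op F"
  unfolding bdd_op_def using bounded_linear.pos_bounded by (metis less_eq_real_def mult.commute)

lemma bdd_op_onorm: "bdd_op F \<Longrightarrow> norm (F x) \<le> onorm F * norm x"
  using onorm bdd_op_bl by blast

lemma bdd_op_bound: "bdd_op F \<Longrightarrow> \<exists>K\<ge>0. \<forall>x. norm (F x) \<le> K * norm x"
  using bdd_op_onorm onorm_pos_le bdd_op_bl by blast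

lemma onorm_leI: "0 \<le> K \<Longrightarrow> (\<And>x. norm (F x) \<le> K * norm x) \<Longrightarrow> onorm F \<le> K"
  by (rule onorm_bound)

lemma lin_op_compose: "lin_op UNIV F \<Longrightarrow> lin_op UNIV G \<Longrightarrow> lin_op UNIV (\<lambda>x. F (G x))"
  by (simp add: lin_op_def)
lemma lin_op_plus: "lin_op UNIV F \<Longrightarrow> lin_op UNIV G \<Longrightarrow> lin_op UNIV (\<lambda>x. F x + G x)"
  by (simp add: lin_op_def scaleC_add_right algebra_simps)
lemma lin_op_minus: "lin_op UNIV F \<Longrightarrow> lin_op UNIV G \<Longrightarrow> lin_op UNIV (\<lambda>x. F x - G x)"
  by (simp add: lin_op_def scaleC_diff_right algebra_simps)
lemma lin_op_id: "lin_op UNIV (\<lambda>x. x)"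
  by (simp add: lin_op_def)
lemma lin_op_scale: "lin_op UNIV (\<lambda>x. c *\<^sub>C x)"
  by (simp add: lin_op_def scaleC_add_right scaleC_scaleC mult.commute)
lemma lin_op_fst: "lin_op UNIV fst"
  by (simp add: lin_op_def scaleC_prod_def)
lemma lin_op_snd: "lin_op UNIV snd"
  by (simp add: lin_op_def scaleC_prod_def)
lemma lin_op_pair: "lin_op UNIV F \<Longrightarrow> lin_op UNIV G \<Longrightarrow> lin_op UNIV (\<lambda>x. (F x, G x))"
  by (simp add: lin_op_def scaleC_prod_def)

lemma bdd_op_compose:
  assumes "bdd_op F" "bdd_op G" shows "bdd_op (\<lambda>x. F (G x))"
  by (rule bdd_opI2[OF lin_op_compose[OF bdd_op_lin[OF assms(1)] bdd_op_lin[OF assms(2)]]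
        bounded_linear_compose[OF bdd_op_bl[OF assms(1)] bdd_op_bl[OF assms(2)]]])
lemma bdd_op_plus:
  assumes "bdd_op F" "bdd_op G" shows "bdd_op (\<lambda>x. F x + G x)"
  by (rule bdd_opI2[OF lin_op_plus[OF bdd_op_lin[OF assms(1)] bdd_op_lin[OF assms(2)]]
        bounded_linear_add[OF bdd_op_bl[OF assms(1)] bdd_op_bl[OF assms(2)]]])
lemma bdd_op_minus:
  assumes "bdd_op F" "bdd_op G" shows "bdd_op (\<lambda>x. F x - G x)"
  by (rule bdd_opI2[OF lin_op_minus[OF bdd_op_lin[OF assms(1)] bdd_op_lin[OF assms(2)]]
        bounded_linear_sub[OF bdd_op_bl[OF assms(1)] bdd_op_bl[OF assms(2)]]])
lemma bdd_op_id: "bdd_op (\<lambda>x. x)"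
  by (rule bdd_opI2[OF lin_op_id bounded_linear_ident])
lemma bdd_op_scale: "bdd_op (\<lambda>x. c *\<^sub>C x)"
  by (rule bdd_opI[OF lin_op_scale, of _ "cmod c"]) (simp add: norm_scaleC)
lemma bdd_op_fst: "bdd_op fst"
  by (rule bdd_opI2[OF lin_op_fst bounded_linear_fst])
lemma bdd_op_snd: "bdd_op snd"
  by (rule bdd_opI2[OF lin_op_snd bounded_linear_snd])
lemma bdd_op_pair:
  assumes "bdd_op F" "bdd_op G" shows "bdd_op (\<lambda>x. (F x, G x))"
  by (rule bdd_opI2[OF lin_op_pair[OF bdd_op_lin[OF assms(1)] bdd_op_lin[OF assms(2)]]
        bounded_linear_Pair[OF bdd_op_bl[OF assms(1)] bdd_op_bl[OF assms(2)]]])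
lemma bdd_op_zero: "bdd_op (\<lambda>x. 0)"
  by (rule bdd_opI[of _ 0]) (simp_all add: lin_op_def)
lemma bdd_op_inl: "bdd_op (\<lambda>x. (x, 0))"
  by (intro bdd_op_pair bdd_op_id bdd_op_zero)
lemma bdd_op_inr: "bdd_op (\<lambda>x. (0, x))"
  by (intro bdd_op_pair bdd_op_id bdd_op_zero)

lemma bdd_invertibleI:
  assumes "bdd_op G" "\<And>u. G u \<in> S" "\<And>u. F (G u) = u" "\<And>x. x \<in> S \<Longrightarrow> G (F x) = x"
  shows "bdd_invertible S F" "\<And>u. inv_into S F u = G u"
proof -
  have inj: "inj_on F S" unfolding inj_on_def using assms(4) by metis
  have "F ` S = UNIV"
  proof (intro set_eqI iffI)
    fix u show "u \<in> F ` S" using assms(2,3) by (metis image_eqI)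
  qed simp
  then have bij: "bij_betw F S UNIV" using inj unfolding bij_betw_def by blast
  have eq: "inv_into S F u = G u" for u
    using inv_into_f_f[OF inj assms(2)[of u]] assms(3) by simp
  have "inv_into S F = G" using eq by (rule ext)
  then show "bdd_invertible S F" unfolding bdd_invertible_def using bij assms(1) by simp
  show "\<And>u. inv_into S F u = G u" by (rule eq)
qed

lemma bdd_invertibleD:
  assumes "bdd_invertible S F"
  shows "bdd_op (inv_into S F)" "\<And>u. inv_into S F u \<in> S" "\<And>u. F (inv_into S F u) = u"
    "\<And>x. x \<in> S \<Longrightarrow> inv_into S F (F x) = x"
  using assms unfolding bdd_invertible_def
  by (auto simp: bij_betw_inv_into_right bij_betw_imp_inj_on inv_into_into bij_betw_def)

lemma resolventD:
  assumes "z \<in> resolvent_set S T"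
  shows "bdd_op (resolvent S T z)" "\<And>u. resolvent S T z u \<in> S"
    "\<And>u. z *\<^sub>C resolvent S T z u - T (resolvent S T z u) = u"
    "\<And>x. x \<in> S \<Longrightarrow> resolvent S T z (z *\<^sub>C x - T x) = x"
  using bdd_invertibleD[of S "\<lambda>x. z *\<^sub>C x - T x"] assms
  by (auto simp: resolvent_set_def resolvent_def)

lemma resolvent_setI:
  assumes "bdd_op G" "\<And>u. G u \<in> S" "\<And>u. z *\<^sub>C G u - T (G u) = u"
    "\<And>x. x \<in> S \<Longrightarrow> G (z *\<^sub>C x - T x) = x"
  shows "z \<in> resolvent_set S T" "resolvent S T z = G"
  using bdd_invertibleI[of G S "\<lambda>x. z *\<^sub>C x - T x"] assms
  by (auto simp: resolvent_set_def resolvent_def)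

lemma sector_mono: "\<omega> \<le> \<phi> \<Longrightarrow> sector \<omega> \<subseteq> sector \<phi>"
  by (auto simp: sector_def)

lemma csector_anti: "\<omega> \<le> \<phi> \<Longrightarrow> csector \<phi> \<subseteq> csector \<omega>"
  unfolding csector_def using closure_mono[OF sector_mono] by blast

lemma sectorial_with_mono:
  assumes "sectorial_with S T \<omega>" "\<omega> \<le> \<phi>" "\<phi> < pi"
  shows "sectorial_with S T \<phi>"
proof -
  have "closure (sector \<omega>) \<subseteq> closure (sector \<phi>)"
    using closure_mono[OF sector_mono[OF assms(2)]] .
  moreover have "csector \<phi> \<subseteq> csector \<omega>" using csector_anti[OF assms(2)] .
  ultimately show ?thesis using assms unfolding sectorial_with_def
    by (meson order_trans order_less_le_trans subsetD)
qed

lemma sectorial_with_res: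
  "sectorial_with S T \<omega> \<Longrightarrow> z \<in> csector \<omega> \<Longrightarrow> z \<in> resolvent_set S T"
  unfolding sectorial_with_def csector_def spectrum_op_def by blast

lemma sectorial_with_bound:
  assumes "sectorial_with S T \<omega>"
  shows "\<exists>K\<ge>0. \<forall>z\<in>csector \<omega>. \<forall>u. norm (z *\<^sub>C resolvent S T z u) \<le> K * norm u"
proof -
  obtain K where K: "\<forall>z\<in>csector \<omega>. onorm (\<lambda>y. z *\<^sub>C resolvent S T z y) \<le> K"
    using assms unfolding sectorial_with_def by blast
  have "norm (z *\<^sub>C resolvent S T z u) \<le> max K 0 * norm u" if z: "z \<in> csector \<omega>" for z u
  proof -
    have "bdd_op (\<lambda>y. z *\<^sub>C resolvent S T z y)"
      using bdd_op_compose[OF bdd_op_scale resolventD(1)[OF sectorial_with_res[OF assms z]]] .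
    then have "norm (z *\<^sub>C resolvent S T z u) \<le> onorm (\<lambda>y. z *\<^sub>C resolvent S T z y) * norm u"
      by (rule bdd_op_onorm)
    also have "\<dots> \<le> max K 0 * norm u" using K z by (intro mult_right_mono) auto
    finally show ?thesis .
  qed
  then show ?thesis by (intro exI[of _ "max K 0"]) auto
qed

lemma sect_angle_nonneg: "sectorial S T \<Longrightarrow> 0 \<le> sect_angle S T"
  unfolding sect_angle_def
proof (rule cInf_greatest)
  assume "sectorial S T"
  then show "{\<omega>. sectorial_with S T \<omega>} \<noteq> {}" unfolding sectorial_def by blast
next
  fix x assume "x \<in> {\<omega>. sectorial_with S T \<omega>}"
  then show "0 \<le> x" by (simp add: sectorial_with_def)
qed

lemma sect_angle_le: "sectorial_with S T \<phi> \<Longrightarrow> sect_angle S T \<le> \<phi>"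
  unfolding sect_angle_def
  by (rule cInf_lower) (auto simp: sectorial_with_def bdd_below_def intro!: exI[of _ 0])

lemma sect_angle_lt:
  assumes "sectorial S T" "sect_angle S T < \<phi>" "\<phi> < pi"
  shows "sectorial_with S T \<phi>"
proof -
  obtain \<omega> where "sectorial_with S T \<omega>" "\<omega> < \<phi>"
    using cInf_lessD[of "{\<omega>. sectorial_with S T \<omega>}" \<phi>] assms
    unfolding sectorial_def sect_angle_def by auto
  then show ?thesis using sectorial_with_mono assms(3) by force
qed

lemma Inf_le_interval:
  fixes X :: "real set"
  assumes "\<And>\<sigma>. \<psi> < \<sigma> \<Longrightarrow> \<sigma> < pi \<Longrightarrow> \<sigma> \<in> X" "bdd_below X" "\<psi> < pi"
  shows "Inf X \<le> \<psi>"
proof (rule ccontr)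
  assume "\<not> Inf X \<le> \<psi>"
  define \<sigma> where "\<sigma> = (\<psi> + min (Inf X) pi) / 2"
  have "\<psi> < \<sigma>" "\<sigma> < pi" "\<sigma> < Inf X" using \<open>\<not> Inf X \<le> \<psi>\<close> assms(3)
    by (auto simp: \<sigma>_def min_def)
  then have "\<sigma> \<in> X" using assms(1) by blast
  then have "Inf X \<le> \<sigma>" using assms(2) by (rule cInf_lower)
  with \<open>\<sigma> < Inf X\<close> show False by simp
qed

lemma R_sectorial_with_D:
  "R_sectorial_with S T \<sigma> \<Longrightarrow> sectorial S T \<and> sect_angle S T < \<sigma> \<and> \<sigma> < pi"
  unfolding R_sectorial_with_def by blast

lemma R_angle_ge: "R_sectorial S T \<Longrightarrow> sect_angle S T \<le> R_angle S T"
  unfolding R_sectorial_def R_angle_def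
  by (rule cInf_greatest) (auto simp: R_sectorial_with_def)

lemma R_angle_bdd: "sectorial S T \<Longrightarrow> bdd_below {\<sigma>. R_sectorial_with S T \<sigma>}"
proof -
  assume "sectorial S T"
  then have "0 \<le> sect_angle S T" by (rule sect_angle_nonneg)
  then have "\<forall>\<sigma>\<in>{\<sigma>. R_sectorial_with S T \<sigma>}. 0 \<le> \<sigma>"
    unfolding R_sectorial_with_def by auto
  then show ?thesis by (auto intro: bdd_belowI)
qed

lemma R_angle_lt:
  assumes "R_sectorial S T" "R_angle S T < \<phi>"
  shows "\<exists>\<sigma><\<phi>. R_sectorial_with S T \<sigma>"
  using cInf_lessD[of "{\<sigma>. R_sectorial_with S T \<sigma>}" \<phi>] assms
  unfolding R_sectorial_def R_angle_def by auto

section \<open>R-boundedness\<close>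

lemma rad_exp_mono:
  "(\<And>es. es \<in> signs m \<Longrightarrow> f es \<le> g es) \<Longrightarrow> rad_exp m f \<le> rad_exp m g"
  unfolding rad_exp_def by (rule divide_right_mono) (auto intro: sum_mono)

lemma rad_exp_add: "rad_exp m (\<lambda>es. f es + g es) = rad_exp m f + rad_exp m g"
  unfolding rad_exp_def by (simp add: sum.distrib add_divide_distrib)

lemma rad_exp_cmult: "rad_exp m (\<lambda>es. c * f es) = c * rad_exp m f"
  unfolding rad_exp_def by (simp add: sum_distrib_left)

lemma R_boundD:
  assumes "R_bound J K" "\<And>n. n < m \<Longrightarrow> Ts n \<in> J"
  shows "rad_exp m (\<lambda>es. (norm (\<Sum>n<m. (es ! n) *\<^sub>R Ts n (xs n)))\<^sup>2)
        \<le> K\<^sup>2 * rad_exp m (\<lambda>es. (norm (\<Sum>n<m. (es ! n) *\<^sub>R xs n))\<^sup>2)"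
  using assms unfolding R_bound_def by blast

lemma R_bound_mono: "R_bound J K \<Longrightarrow> J' \<subseteq> J \<Longrightarrow> R_bound J' K"
  unfolding R_bound_def by (meson subsetD)

lemma R_bounded_mono: "R_bounded J \<Longrightarrow> J' \<subseteq> J \<Longrightarrow> R_bounded J'"
  unfolding R_bounded_def using R_bound_mono by blast

lemma R_bound_comp:
  assumes J1: "R_bound J1 K1" and J2: "R_bound J2 K2"
  shows "R_bound {(\<lambda>x. f (g x)) | f g. f \<in> J1 \<and> g \<in> J2} (K1 * K2)"
  unfolding R_bound_def
proof (intro allI impI)
  fix m :: nat and Ts xs
  assume Ts: "\<forall>n<m. Ts n \<in> {(\<lambda>x. f (g x)) | f g. f \<in> J1 \<and> g \<in> J2}"
  then have "\<forall>n. \<exists>fg. n < m \<longrightarrow> Ts n = (\<lambda>x. fst fg (snd fg x)) \<and> fst fg \<in> J1 \<and> snd fg \<in> J2"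
    by force
  from choice[OF this] obtain fg where
    fg: "\<And>n. n < m \<Longrightarrow> Ts n = (\<lambda>x. fst (fg n) (snd (fg n) x)) \<and> fst (fg n) \<in> J1 \<and> snd (fg n) \<in> J2"
    by blast
  define F where "F n = fst (fg n)" for n
  define G where "G n = snd (fg n)" for n
  have eq: "(\<Sum>n<m. (es ! n) *\<^sub>R Ts n (xs n)) = (\<Sum>n<m. (es ! n) *\<^sub>R F n (G n (xs n)))" for es
    by (rule sum.cong) (auto simp: fg F_def G_def)
  have hF: "\<And>n. n < m \<Longrightarrow> F n \<in> J1" and hG: "\<And>n. n < m \<Longrightarrow> G n \<in> J2"
    using fg by (auto simp: F_def G_def)
  have 1: "rad_exp m (\<lambda>es. (norm (\<Sum>n<m. (es ! n) *\<^sub>R F n (G n (xs n))))\<^sup>2)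
      \<le> K1\<^sup>2 * rad_exp m (\<lambda>es. (norm (\<Sum>n<m. (es ! n) *\<^sub>R G n (xs n)))\<^sup>2)"
    using R_boundD[OF J1 hF, where xs="\<lambda>n. G n (xs n)"] by simp
  have 2: "rad_exp m (\<lambda>es. (norm (\<Sum>n<m. (es ! n) *\<^sub>R G n (xs n)))\<^sup>2)
      \<le> K2\<^sup>2 * rad_exp m (\<lambda>es. (norm (\<Sum>n<m. (es ! n) *\<^sub>R xs n))\<^sup>2)"
    using R_boundD[OF J2 hG, where xs=xs] by simp
  show "rad_exp m (\<lambda>es. (norm (\<Sum>n<m. (es ! n) *\<^sub>R Ts n (xs n)))\<^sup>2)
      \<le> (K1 * K2)\<^sup>2 * rad_exp m (\<lambda>es. (norm (\<Sum>n<m. (es ! n) *\<^sub>R xs n))\<^sup>2)"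
    unfolding eq using order_trans[OF 1 mult_left_mono[OF 2]]
    by (simp add: power_mult_distrib mult.assoc)
qed

lemma real_add_sq_le: "(x + y)\<^sup>2 \<le> 2 * x\<^sup>2 + 2 * (y::real)\<^sup>2"
proof -
  have e: "(x + y)\<^sup>2 + (x - y)\<^sup>2 = 2 * x\<^sup>2 + 2 * y\<^sup>2"
    by (simp add: power2_eq_square algebra_simps)
  have "0 \<le> (x - y)\<^sup>2" by (rule zero_le_power2)
  with e show ?thesis by linarith
qed

lemma norm_add_sq_le: "(norm (a + b))\<^sup>2 \<le> 2 * (norm a)\<^sup>2 + 2 * (norm (b::'a::real_normed_vector))\<^sup>2"
proof -
  have t: "norm (a + b) \<le> norm a + norm b" by (rule norm_triangle_ineq)
  have "(norm (a + b))\<^sup>2 \<le> (norm a + norm b)\<^sup>2" using power_mono[OF t norm_ge_zero] .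
  also have "\<dots> \<le> 2 * (norm a)\<^sup>2 + 2 * (norm b)\<^sup>2" by (rule real_add_sq_le)
  finally show ?thesis .
qed

lemma R_bound_add:
  fixes J1 J2 :: "('a::cplx_normed_vector \<Rightarrow> 'b::cplx_normed_vector) set"
  assumes J1: "R_bound J1 K1" and J2: "R_bound J2 K2"
  shows "R_bound {(\<lambda>x. f x + g x) | f g. f \<in> J1 \<and> g \<in> J2} (sqrt (2 * (K1\<^sup>2 + K2\<^sup>2)))"
  unfolding R_bound_def
proof (intro allI impI)
  fix m :: nat and Ts and xs :: "nat \<Rightarrow> 'a"
  assume Ts: "\<forall>n<m. Ts n \<in> {(\<lambda>x. f x + g x) | f g. f \<in> J1 \<and> g \<in> J2}"
  then have "\<forall>n. \<exists>fg. n < m \<longrightarrow> Ts n = (\<lambda>x. fst fg x + snd fg x) \<and> fst fg \<in> J1 \<and> snd fg \<in> J2"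
    by force
  from choice[OF this] obtain fg where
    fg: "\<And>n. n < m \<Longrightarrow> Ts n = (\<lambda>x. fst (fg n) x + snd (fg n) x) \<and> fst (fg n) \<in> J1 \<and> snd (fg n) \<in> J2"
    by blast
  define F where "F n = fst (fg n)" for n
  define G where "G n = snd (fg n)" for n
  define E where "E = rad_exp m (\<lambda>es. (norm (\<Sum>n<m. (es ! n) *\<^sub>R xs n))\<^sup>2)"
  have eq: "(\<Sum>n<m. (es ! n) *\<^sub>R Ts n (xs n)) =
      (\<Sum>n<m. (es ! n) *\<^sub>R F n (xs n)) + (\<Sum>n<m. (es ! n) *\<^sub>R G n (xs n))" for es
    by (simp add: sum.distrib[symmetric] scaleR_add_right[symmetric] fg F_def G_def)
  have hF: "\<And>n. n < m \<Longrightarrow> F n \<in> J1" and hG: "\<And>n. n < m \<Longrightarrow> G n \<in> J2"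
    using fg by (auto simp: F_def G_def)
  have 1: "rad_exp m (\<lambda>es. (norm (\<Sum>n<m. (es ! n) *\<^sub>R F n (xs n)))\<^sup>2) \<le> K1\<^sup>2 * E"
    using R_boundD[OF J1 hF, where xs=xs] unfolding E_def .
  have 2: "rad_exp m (\<lambda>es. (norm (\<Sum>n<m. (es ! n) *\<^sub>R G n (xs n)))\<^sup>2) \<le> K2\<^sup>2 * E"
    using R_boundD[OF J2 hG, where xs=xs] unfolding E_def .
  have "rad_exp m (\<lambda>es. (norm (\<Sum>n<m. (es ! n) *\<^sub>R Ts n (xs n)))\<^sup>2)
     \<le> rad_exp m (\<lambda>es. 2 * (norm (\<Sum>n<m. (es ! n) *\<^sub>R F n (xs n)))\<^sup>2
            + 2 * (norm (\<Sum>n<m. (es ! n) *\<^sub>R G n (xs n)))\<^sup>2)"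
    unfolding eq by (rule rad_exp_mono) (rule norm_add_sq_le)
  also have "\<dots> \<le> 2 * (K1\<^sup>2 * E) + 2 * (K2\<^sup>2 * E)"
    unfolding rad_exp_add rad_exp_cmult using 1 2 by simp
  also have "\<dots> = (sqrt (2 * (K1\<^sup>2 + K2\<^sup>2)))\<^sup>2 * E"
    by (simp add: algebra_simps)
  finally show "rad_exp m (\<lambda>es. (norm (\<Sum>n<m. (es ! n) *\<^sub>R Ts n (xs n)))\<^sup>2)
      \<le> (sqrt (2 * (K1\<^sup>2 + K2\<^sup>2)))\<^sup>2 * rad_exp m (\<lambda>es. (norm (\<Sum>n<m. (es ! n) *\<^sub>R xs n))\<^sup>2)"
    unfolding E_def .
qed

lemma R_bound_single:
  fixes T :: "'a::cplx_normed_vector \<Rightarrow> 'b::cplx_normed_vector"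
  assumes "bounded_linear T"
  shows "R_bound {T} (onorm T)"
  unfolding R_bound_def
proof (intro allI impI)
  fix m :: nat and Ts and xs :: "nat \<Rightarrow> 'a"
  assume Ts: "\<forall>n<m. Ts n \<in> {T}"
  interpret T: bounded_linear T by fact
  have eq: "(\<Sum>n<m. (es ! n) *\<^sub>R Ts n (xs n)) = T (\<Sum>n<m. (es ! n) *\<^sub>R xs n)" for es
    using Ts by (simp add: T.sum T.scaleR)
  show "rad_exp m (\<lambda>es. (norm (\<Sum>n<m. (es ! n) *\<^sub>R Ts n (xs n)))\<^sup>2)
      \<le> (onorm T)\<^sup>2 * rad_exp m (\<lambda>es. (norm (\<Sum>n<m. (es ! n) *\<^sub>R xs n))\<^sup>2)"
    unfolding eq rad_exp_cmult[symmetric]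
    by (rule rad_exp_mono) (simp add: power_mult_distrib[symmetric] power_mono onorm[OF assms])
qed

lemma signs_one: "signs 1 = {[-1], [1]}"
  unfolding signs_def by (auto simp: length_Suc_conv)

lemma R_bound_norm:
  assumes "R_bound J K" "T \<in> J"
  shows "norm (T x) \<le> \<bar>K\<bar> * norm x"
proof -
  have "rad_exp 1 (\<lambda>es. (norm (\<Sum>n<1. (es ! n) *\<^sub>R (\<lambda>_. T) n ((\<lambda>_. x) n)))\<^sup>2)
      \<le> K\<^sup>2 * rad_exp 1 (\<lambda>es. (norm (\<Sum>n<1. (es ! n) *\<^sub>R (\<lambda>_. x) n))\<^sup>2)"
    using R_boundD[OF assms(1), of 1 "\<lambda>_. T" "\<lambda>_. x"] assms(2) by blast
  then have "(norm (T x))\<^sup>2 \<le> K\<^sup>2 * (norm x)\<^sup>2"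
    using signs_one by (simp add: rad_exp_def)
  then have "(norm (T x))\<^sup>2 \<le> (\<bar>K\<bar> * norm x)\<^sup>2" by (simp add: power_mult_distrib)
  then show ?thesis by (rule power2_le_imp_le) simp
qed

lemma R_bound_prod:
  fixes J :: "('a::cplx_normed_vector \<Rightarrow> 'b::cplx_normed_vector \<times> 'c::cplx_normed_vector) set"
  assumes J1: "R_bound {(\<lambda>x. fst (T x)) | T. T \<in> J} K1"
    and J2: "R_bound {(\<lambda>x. snd (T x)) | T. T \<in> J} K2"
  shows "R_bound J (sqrt (K1\<^sup>2 + K2\<^sup>2))"
  unfolding R_bound_def
proof (intro allI impI)
  fix m :: nat and Ts and xs :: "nat \<Rightarrow> 'a"
  assume Ts: "\<forall>n<m. Ts n \<in> J"
  define E where "E = rad_exp m (\<lambda>es. (norm (\<Sum>n<m. (es ! n) *\<^sub>R xs n))\<^sup>2)"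
  have h1: "\<And>n. n < m \<Longrightarrow> (\<lambda>x. fst (Ts n x)) \<in> {(\<lambda>x. fst (T x)) | T. T \<in> J}"
    and h2: "\<And>n. n < m \<Longrightarrow> (\<lambda>x. snd (Ts n x)) \<in> {(\<lambda>x. snd (T x)) | T. T \<in> J}"
    using Ts by blast+
  have 1: "rad_exp m (\<lambda>es. (norm (\<Sum>n<m. (es ! n) *\<^sub>R (\<lambda>x. fst (Ts n x)) (xs n)))\<^sup>2) \<le> K1\<^sup>2 * E"
    using R_boundD[OF J1, of m "\<lambda>n x. fst (Ts n x)" xs] h1 unfolding E_def by blast
  have 2: "rad_exp m (\<lambda>es. (norm (\<Sum>n<m. (es ! n) *\<^sub>R (\<lambda>x. snd (Ts n x)) (xs n)))\<^sup>2) \<le> K2\<^sup>2 * E"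
    using R_boundD[OF J2, of m "\<lambda>n x. snd (Ts n x)" xs] h2 unfolding E_def by blast
  have eq: "(norm (\<Sum>n<m. (es ! n) *\<^sub>R Ts n (xs n)))\<^sup>2 =
     (norm (\<Sum>n<m. (es ! n) *\<^sub>R (\<lambda>x. fst (Ts n x)) (xs n)))\<^sup>2
     + (norm (\<Sum>n<m. (es ! n) *\<^sub>R (\<lambda>x. snd (Ts n x)) (xs n)))\<^sup>2" for es
    by (simp add: norm_prod_def fst_sum snd_sum)
  show "rad_exp m (\<lambda>es. (norm (\<Sum>n<m. (es ! n) *\<^sub>R Ts n (xs n)))\<^sup>2)
      \<le> (sqrt (K1\<^sup>2 + K2\<^sup>2))\<^sup>2 * E"
    unfolding eq rad_exp_add using 1 2 by (simp add: algebra_simps)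
qed

lemma R_bounded_comp_idx:
  assumes "R_bounded {f z | z. z \<in> Z}" "R_bounded {g z | z. z \<in> Z}"
  shows "R_bounded {(\<lambda>x. f z (g z x)) | z. z \<in> Z}"
proof -
  obtain K1 K2 where "R_bound {f z | z. z \<in> Z} K1" "R_bound {g z | z. z \<in> Z} K2"
    using assms unfolding R_bounded_def by blast
  from R_bound_comp[OF this] show ?thesis unfolding R_bounded_def
    by (intro exI[of _ "K1 * K2"]) (erule R_bound_mono, blast)
qed

lemma R_bounded_add_idx:
  assumes "R_bounded {f z | z. z \<in> Z}" "R_bounded {g z | z. z \<in> Z}"
  shows "R_bounded {(\<lambda>x. f z x + g z x) | z. z \<in> Z}"
proof -
  obtain K1 K2 where "R_bound {f z | z. z \<in> Z} K1" "R_bound {g z | z. z \<in> Z} K2"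
    using assms unfolding R_bounded_def by blast
  from R_bound_add[OF this] show ?thesis unfolding R_bounded_def
    by (intro exI) (erule R_bound_mono, blast)
qed

lemma R_bounded_const_idx:
  assumes "bounded_linear T"
  shows "R_bounded {T | z. z \<in> Z}"
  using R_bound_single[OF assms] unfolding R_bounded_def
  by (intro exI) (erule R_bound_mono, blast)

lemma R_bounded_diff_idx:
  fixes f g :: "'z \<Rightarrow> 'a::cplx_normed_vector \<Rightarrow> 'b::cplx_normed_vector"
  assumes "R_bounded {f z | z. z \<in> Z}" "R_bounded {g z | z. z \<in> Z}"
  shows "R_bounded {(\<lambda>x. f z x - g z x) | z. z \<in> Z}"
proof -
  have "R_bounded {(\<lambda>x. - (g z x)) | z. z \<in> Z}"
    using R_bounded_comp_idx[OF R_bounded_const_idx[OF bounded_linear_minus[OF bounded_linear_ident]]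
        assms(2)] by simp
  from R_bounded_add_idx[OF assms(1) this] show ?thesis by simp
qed

lemma R_bounded_prod_idx:
  fixes T :: "'z \<Rightarrow> 'a::cplx_normed_vector \<Rightarrow> 'b::cplx_normed_vector \<times> 'c::cplx_normed_vector"
  assumes "R_bounded {(\<lambda>x. fst (T z x)) | z. z \<in> Z}" "R_bounded {(\<lambda>x. snd (T z x)) | z. z \<in> Z}"
  shows "R_bounded {T z | z. z \<in> Z}"
proof -
  obtain K1 K2 where "R_bound {(\<lambda>x. fst (T z x)) | z. z \<in> Z} K1"
     "R_bound {(\<lambda>x. snd (T z x)) | z. z \<in> Z} K2"
    using assms unfolding R_bounded_def by blast
  then have "R_bound {(\<lambda>x. fst (S x)) | S. S \<in> {T z | z. z \<in> Z}} K1"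
     "R_bound {(\<lambda>x. snd (S x)) | S. S \<in> {T z | z. z \<in> Z}} K2"
    by (auto elim!: R_bound_mono)
  from R_bound_prod[OF this] show ?thesis unfolding R_bounded_def by blast
qed

lemma R_bounded_cong_idx:
  assumes "R_bounded {f z | z. z \<in> Z}" "\<And>z x. z \<in> Z \<Longrightarrow> g z x = f z x"
  shows "R_bounded {g z | z. z \<in> Z}"
proof -
  have "{g z | z. z \<in> Z} \<subseteq> {f z | z. z \<in> Z}" using assms(2) by (auto intro!: ext)
  then show ?thesis using assms(1) R_bounded_mono by blast
qed

lemma R_bounded_subset_idx:
  assumes "R_bounded {f z | z. z \<in> Z}" "Y \<subseteq> Z"
  shows "R_bounded {f z | z. z \<in> Y}"
  using assms R_bounded_mono[of "{f z | z. z \<in> Z}" "{f z | z. z \<in> Y}"] by blast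

lemma R_bounded_norm_idx:
  assumes "R_bounded {f z | z. z \<in> Z}"
  shows "\<exists>K\<ge>0. \<forall>z\<in>Z. \<forall>x. norm (f z x) \<le> K * norm x"
  using assms R_bound_norm unfolding R_bounded_def
  by (metis (mono_tags, lifting) abs_ge_zero mem_Collect_eq)

section \<open>Bounded inverse theorem\<close>

lemma open_mapping_approx:
  fixes f :: "'a::banach \<Rightarrow> 'b::banach"
  assumes f: "bounded_linear f" and surj: "surj f"
  shows "\<exists>M>0. \<forall>y e. e > 0 \<longrightarrow> (\<exists>x. norm x \<le> M * norm y \<and> norm (y - f x) < e)"
proof -
  interpret f: bounded_linear f by fact
  define U where "U n = closure (f ` cball 0 (real n))" for n :: nat
  have UN: "\<Union> (range U) = UNIV"
  proof -
    have "y \<in> \<Union> (range U)" for y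
    proof -
      obtain x where "y = f x" using surj by (metis surjD)
      obtain n :: nat where "norm x \<le> real n" using real_arch_simple by blast
      then have "y \<in> U n" unfolding U_def using \<open>y = f x\<close> closure_subset by fastforce
      then show ?thesis by blast
    qed
    then show ?thesis by blast
  qed
  have "\<exists>n. interior (U n) \<noteq> {}"
  proof (rule ccontr)
    assume "\<not> (\<exists>n. interior (U n) \<noteq> {})"
    then have "euclidean interior_of \<Union> (range U) = {}"
      by (intro Baire_category_alt)
        (auto simp: completely_metrizable_space_euclidean closed_closedin[symmetric] U_def)
    then show False using UN by simp
  qed
  then obtain n y0 where "y0 \<in> interior (U n)" by blast
  then obtain r where r: "r > 0" "ball y0 r \<subseteq> U n"
    using open_contains_ball interior_subset by (metis open_interior subset_trans)
  have P: "\<exists>x. norm x \<le> 2 * real n \<and> norm (y - f x) < e" if "norm y < r" "e > 0" for y e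
  proof -
    have "y0 + y \<in> ball y0 r" using that(1) by (simp add: dist_norm)
    then have u1: "y0 + y \<in> U n" using r(2) by blast
    have "y0 \<in> ball y0 r" using r(1) by simp
    then have u2: "y0 \<in> U n" using r(2) by blast
    have e2: "e / 2 > 0" using \<open>e > 0\<close> by simp
    obtain z1 where z1: "z1 \<in> f ` cball 0 (real n)" "dist z1 (y0 + y) < e / 2"
      using u1 e2 unfolding U_def closure_approachable by blast
    obtain z2 where z2: "z2 \<in> f ` cball 0 (real n)" "dist z2 y0 < e / 2"
      using u2 e2 unfolding U_def closure_approachable by blast
    obtain x1 where x1: "x1 \<in> cball 0 (real n)" "dist (f x1) (y0 + y) < e / 2"
      using z1 by blast
    obtain x2 where x2: "x2 \<in> cball 0 (real n)" "dist (f x2) y0 < e / 2"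
      using z2 by blast
    have "norm (x1 - x2) \<le> 2 * real n"
      using x1(1) x2(1) norm_triangle_ineq4[of x1 x2] by auto
    moreover have "norm (y - f (x1 - x2)) < e"
    proof -
      have "y - f (x1 - x2) = ((y0 + y) - f x1) + (f x2 - y0)" by (simp add: f.diff algebra_simps)
      then have "norm (y - f (x1 - x2)) \<le> norm ((y0 + y) - f x1) + norm (f x2 - y0)"
        by (metis norm_triangle_ineq)
      then show ?thesis using x1(2) x2(2) by (simp add: dist_norm norm_minus_commute)
    qed
    ultimately show ?thesis by blast
  qed
  define M where "M = 4 * real n / r + 1"
  have "0 \<le> 4 * real n / r" using r(1) by simp
  then have M: "M > 0" by (simp add: M_def)
  have "\<exists>x. norm x \<le> M * norm y \<and> norm (y - f x) < e" if "e > 0" for y e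
  proof (cases "y = 0")
    case True then show ?thesis using that by (intro exI[of _ 0]) simp
  next
    case False
    define t where "t = r / (2 * norm y)"
    have t: "t > 0" using r False by (simp add: t_def)
    have "norm (t *\<^sub>R y) < r" using r False by (simp add: t_def)
    then obtain x' where x': "norm x' \<le> 2 * real n" "norm (t *\<^sub>R y - f x') < e * t"
      using P[of "t *\<^sub>R y" "e * t"] t \<open>e > 0\<close> by auto
    define x where "x = (1 / t) *\<^sub>R x'"
    have "norm x = norm x' / t" using t by (simp add: x_def)
    also have "\<dots> \<le> 2 * real n / t" using x' t by (simp add: divide_right_mono)
    also have "\<dots> = 4 * real n / r * norm y" using r False by (simp add: t_def)
    also have "\<dots> \<le> M * norm y" by (simp add: M_def distrib_right)
    finally have 1: "norm x \<le> M * norm y" .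
    have "y - f x = (1 / t) *\<^sub>R (t *\<^sub>R y - f x')" using t by (simp add: x_def f.scaleR algebra_simps)
    then have "norm (y - f x) = norm (t *\<^sub>R y - f x') / t" using t by simp
    also have "\<dots> < e" using x' t by (simp add: divide_less_eq mult.commute)
    finally show ?thesis using 1 by blast
  qed
  then show ?thesis using M by blast
qed

lemma bounded_inverse_bound:
  fixes f :: "'a::banach \<Rightarrow> 'b::banach"
  assumes f: "bounded_linear f" and bij: "bij f"
  shows "\<exists>K. \<forall>y. norm (inv f y) \<le> K * norm y"
proof -
  interpret f: bounded_linear f by fact
  obtain M where M: "M > 0" "\<And>y e. e > 0 \<Longrightarrow> \<exists>x. norm x \<le> M * norm y \<and> norm (y - f x) < e"
    using open_mapping_approx[OF f bij_is_surj[OF bij]] by blast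
  define g where "g y e = (SOME x. norm x \<le> M * norm y \<and> norm (y - f x) < e)" for y e
  have g: "norm (g y e) \<le> M * norm y" "norm (y - f (g y e)) < e" if "e > 0" for y e
    using someI_ex[OF M(2)[OF that, of y]] unfolding g_def by auto
  have "norm (inv f y) \<le> (2 * M) * norm y" for y
  proof (cases "y = 0")
    case True
    then have "inv f y = 0" using bij f.zero by (metis bij_inv_eq_iff)
    then show ?thesis using True by simp
  next
    case False
    define e where "e k = norm y / 2 ^ Suc k" for k :: nat
    have e: "e k > 0" for k using False by (simp add: e_def)
    define r where "r = rec_nat y (\<lambda>k rk. rk - f (g rk (e k)))"
    have r0: "r 0 = y" and rS: "r (Suc k) = r k - f (g (r k) (e k))" for k
      by (simp_all add: r_def)
    define x where "x k = g (r k) (e k)" for k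
    have rn: "norm (r k) \<le> norm y / 2 ^ k" for k
    proof (cases k)
      case 0 then show ?thesis by (simp add: r0)
    next
      case (Suc j)
      have "norm (r (Suc j)) < e j" using g(2)[OF e] by (simp add: rS)
      then show ?thesis using Suc by (simp add: e_def)
    qed
    have xn: "norm (x k) \<le> M * norm y * (1 / 2) ^ k" for k
    proof -
      have "norm (x k) \<le> M * norm (r k)" using g(1)[OF e] by (simp add: x_def)
      also have "\<dots> \<le> M * (norm y / 2 ^ k)" using mult_left_mono[OF rn[of k], of M] M(1) by linarith
      finally show ?thesis by (simp add: power_one_over field_simps)
    qed
    have geo: "summable (\<lambda>k. M * norm y * (1 / 2) ^ k)"
      by (intro summable_mult summable_geometric) simp
    have sx: "summable x" using summable_comparison_test'[OF geo, of 0 x] xn by simp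
    have snx: "summable (\<lambda>k. norm (x k))"
      using summable_comparison_test'[OF geo, of 0 "\<lambda>k. norm (x k)"] xn by simp
    have partial: "(\<Sum>k<n. f (x k)) = y - r n" for n
      by (induction n) (simp_all add: r0 rS x_def)
    have "r \<longlonglongrightarrow> 0"
    proof -
      have "(\<lambda>k. norm y * (1 / 2) ^ k) \<longlonglongrightarrow> norm y * 0"
        by (intro tendsto_mult tendsto_const LIMSEQ_power_zero) simp
      then have "(\<lambda>k. norm y * (1 / 2) ^ k) \<longlonglongrightarrow> 0" by simp
      then show ?thesis
        by (rule Lim_null_comparison[rotated]) (use rn in \<open>simp add: power_one_over field_simps\<close>)
    qed
    then have "(\<lambda>n. y - r n) \<longlonglongrightarrow> y - 0" by (intro tendsto_diff tendsto_const)
    then have "(\<lambda>k. f (x k)) sums y" unfolding sums_def partial by simp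
    moreover have "(\<lambda>k. f (x k)) sums f (suminf x)"
      using f.sums[OF summable_sums[OF sx]] .
    ultimately have fx: "f (suminf x) = y" using sums_unique2 by metis
    then have "inv f y = suminf x" using bij by (metis bij_inv_eq_iff)
    moreover have "norm (suminf x) \<le> (\<Sum>k. norm (x k))" using summable_norm[OF snx] .
    moreover have "(\<Sum>k. norm (x k)) \<le> (\<Sum>k. M * norm y * (1 / 2) ^ k)"
      using suminf_le[OF xn snx geo] .
    moreover have "(\<Sum>k. M * norm y * (1 / 2) ^ k) = 2 * M * norm y"
      by (simp add: suminf_mult suminf_geometric summable_geometric)
    ultimately show ?thesis by simp
  qed
  then show ?thesis by blast
qed

lemma bdd_op_inv:
  fixes F :: "'a::{cplx_normed_vector,banach} \<Rightarrow> 'b::{cplx_normed_vector,banach}"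
  assumes "bdd_op F" "bij F"
  shows "bdd_op (inv F)"
proof -
  have lin: "lin_op UNIV F" using assms(1) by (rule bdd_op_lin)
  have FI: "F (inv F u) = u" for u using assms(2) by (simp add: bij_is_surj surj_f_inv_f)
  have IF: "inv F (F x) = x" for x using assms(2) by (simp add: bij_is_inj)
  have "lin_op UNIV (inv F)"
  proof (rule lin_opI)
    show "inv F (x + y) = inv F x + inv F y" for x y
    proof -
      have "F (inv F x + inv F y) = x + y" using lin_op_add[OF lin UNIV_I UNIV_I] FI by simp
      then have "inv F (x + y) = inv F (F (inv F x + inv F y))" by simp
      then show ?thesis using IF by simp
    qed
    show "inv F (c *\<^sub>C x) = c *\<^sub>C inv F x" for c x
    proof -
      have "F (c *\<^sub>C inv F x) = c *\<^sub>C x" using lin_op_scaleC[OF lin UNIV_I] FI by simp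
      then have "inv F (c *\<^sub>C x) = inv F (F (c *\<^sub>C inv F x))" by simp
      then show ?thesis using IF by simp
    qed
  qed simp
  moreover obtain K where "\<forall>y. norm (inv F y) \<le> K * norm y"
    using bounded_inverse_bound[OF bdd_op_bl[OF assms(1)] assms(2)] by blast
  ultimately show ?thesis by (intro bdd_opI) auto
qed

section \<open>Uniformly bounded families\<close>

definition ub :: "('z \<Rightarrow> 'a::real_normed_vector \<Rightarrow> 'b::real_normed_vector) \<Rightarrow> 'z set \<Rightarrow> bool" where
  "ub f Z \<longleftrightarrow> (\<exists>K\<ge>0. \<forall>z\<in>Z. \<forall>x. norm (f z x) \<le> K * norm x)"

lemma ubI: "0 \<le> K \<Longrightarrow> (\<And>z x. z \<in> Z \<Longrightarrow> norm (f z x) \<le> K * norm x) \<Longrightarrow> ub f Z"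
  unfolding ub_def by blast

lemma ub_comp:
  assumes "ub f Z" "ub g Z" shows "ub (\<lambda>z x. f z (g z x)) Z"
proof -
  obtain K1 where K1: "K1 \<ge> 0" "\<And>z x. z \<in> Z \<Longrightarrow> norm (f z x) \<le> K1 * norm x"
    using assms(1) unfolding ub_def by blast
  obtain K2 where K2: "K2 \<ge> 0" "\<And>z x. z \<in> Z \<Longrightarrow> norm (g z x) \<le> K2 * norm x"
    using assms(2) unfolding ub_def by blast
  show ?thesis
  proof (rule ubI[of "K1 * K2"])
    show "0 \<le> K1 * K2" using K1 K2 by simp
    fix z x assume z: "z \<in> Z"
    have "norm (f z (g z x)) \<le> K1 * norm (g z x)" using K1(2)[OF z] .
    also have "\<dots> \<le> K1 * (K2 * norm x)" by (rule mult_left_mono[OF K2(2)[OF z] K1(1)])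
    finally show "norm (f z (g z x)) \<le> K1 * K2 * norm x" by (simp add: mult.assoc)
  qed
qed

lemma ub_add:
  assumes "ub f Z" "ub g Z" shows "ub (\<lambda>z x. f z x + g z x) Z"
proof -
  obtain K1 where K1: "K1 \<ge> 0" "\<And>z x. z \<in> Z \<Longrightarrow> norm (f z x) \<le> K1 * norm x"
    using assms(1) unfolding ub_def by blast
  obtain K2 where K2: "K2 \<ge> 0" "\<And>z x. z \<in> Z \<Longrightarrow> norm (g z x) \<le> K2 * norm x"
    using assms(2) unfolding ub_def by blast
  show ?thesis
  proof (rule ubI[of "K1 + K2"])
    show "0 \<le> K1 + K2" using K1 K2 by simp
    fix z x assume z: "z \<in> Z"
    have "norm (f z x + g z x) \<le> norm (f z x) + norm (g z x)" by (rule norm_triangle_ineq)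
    also have "\<dots> \<le> K1 * norm x + K2 * norm x" using K1(2)[OF z] K2(2)[OF z] by (rule add_mono)
    finally show "norm (f z x + g z x) \<le> (K1 + K2) * norm x" by (simp add: distrib_right)
  qed
qed

lemma ub_diff:
  assumes "ub f Z" "ub g Z" shows "ub (\<lambda>z x. f z x - g z x) Z"
proof -
  obtain K1 where K1: "K1 \<ge> 0" "\<And>z x. z \<in> Z \<Longrightarrow> norm (f z x) \<le> K1 * norm x"
    using assms(1) unfolding ub_def by blast
  obtain K2 where K2: "K2 \<ge> 0" "\<And>z x. z \<in> Z \<Longrightarrow> norm (g z x) \<le> K2 * norm x"
    using assms(2) unfolding ub_def by blast
  show ?thesis
  proof (rule ubI[of "K1 + K2"])
    show "0 \<le> K1 + K2" using K1 K2 by simp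
    fix z x assume z: "z \<in> Z"
    have "norm (f z x - g z x) \<le> norm (f z x) + norm (g z x)" by (rule norm_triangle_ineq4)
    also have "\<dots> \<le> K1 * norm x + K2 * norm x" using K1(2)[OF z] K2(2)[OF z] by (rule add_mono)
    finally show "norm (f z x - g z x) \<le> (K1 + K2) * norm x" by (simp add: distrib_right)
  qed
qed

lemma ub_const:
  assumes "bounded_linear T" shows "ub (\<lambda>z. T) Z"
  using onorm[OF assms] onorm_pos_le[OF assms] by (intro ubI) auto

lemma ub_pair:
  assumes "ub f Z" "ub g Z" shows "ub (\<lambda>z x. (f z x, g z x)) Z"
proof -
  obtain K1 where K1: "K1 \<ge> 0" "\<And>z x. z \<in> Z \<Longrightarrow> norm (f z x) \<le> K1 * norm x"
    using assms(1) unfolding ub_def by blast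
  obtain K2 where K2: "K2 \<ge> 0" "\<And>z x. z \<in> Z \<Longrightarrow> norm (g z x) \<le> K2 * norm x"
    using assms(2) unfolding ub_def by blast
  show ?thesis
  proof (rule ubI[of "K1 + K2"])
    show "0 \<le> K1 + K2" using K1 K2 by simp
    fix z x assume z: "z \<in> Z"
    have "norm (f z x, g z x) \<le> norm (f z x) + norm (g z x)" by (rule norm_Pair_le)
    also have "\<dots> \<le> K1 * norm x + K2 * norm x" using K1(2)[OF z] K2(2)[OF z] by (rule add_mono)
    finally show "norm (f z x, g z x) \<le> (K1 + K2) * norm x" by (simp add: distrib_right)
  qed
qed

lemma ub_cong:
  assumes "ub f Z" "\<And>z x. z \<in> Z \<Longrightarrow> g z x = f z x" shows "ub g Z"
  using assms unfolding ub_def by simp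

lemma ub_subset: "ub f Z \<Longrightarrow> Y \<subseteq> Z \<Longrightarrow> ub f Y"
  unfolding ub_def by blast

lemma ub_onorm:
  assumes "ub f Z" "\<And>z. z \<in> Z \<Longrightarrow> bdd_op (f z)"
  shows "\<exists>K. \<forall>z\<in>Z. onorm (f z) \<le> K"
proof -
  obtain K where K: "K \<ge> 0" "\<And>z x. z \<in> Z \<Longrightarrow> norm (f z x) \<le> K * norm x"
    using assms(1) unfolding ub_def by blast
  show ?thesis using K by (intro exI[of _ K] ballI onorm_leI) auto
qed

lemma onorm_ub:
  assumes "\<exists>K. \<forall>z\<in>Z. onorm (f z) \<le> K" "\<And>z. z \<in> Z \<Longrightarrow> bdd_op (f z)"
  shows "ub f Z"
proof -
  obtain K where K: "\<And>z. z \<in> Z \<Longrightarrow> onorm (f z) \<le> K" using assms(1) by blast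
  show ?thesis
  proof (rule ubI[of "max K 0"])
    fix z x assume z: "z \<in> Z"
    have "norm (f z x) \<le> onorm (f z) * norm x" using bdd_op_onorm[OF assms(2)[OF z]] .
    also have "\<dots> \<le> max K 0 * norm x" using K[OF z] by (intro mult_right_mono) auto
    finally show "norm (f z x) \<le> max K 0 * norm x" .
  qed simp
qed

lemma R_bounded_ub:
  assumes "R_bounded {f z | z. z \<in> Z}" shows "ub f Z"
  using R_bounded_norm_idx[OF assms] unfolding ub_def .

lemma R_bounded_pair_idx:
  fixes f :: "'z \<Rightarrow> 'a::cplx_normed_vector \<Rightarrow> 'b::cplx_normed_vector"
    and g :: "'z \<Rightarrow> 'a \<Rightarrow> 'c::cplx_normed_vector"
  assumes "R_bounded {f z | z. z \<in> Z}" "R_bounded {g z | z. z \<in> Z}"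
  shows "R_bounded {(\<lambda>x. (f z x, g z x)) | z. z \<in> Z}"
  by (rule R_bounded_prod_idx) (use assms in simp_all)

lemma R_bounded_const_bdd: "bdd_op T \<Longrightarrow> R_bounded {T | z. z \<in> Z}"
  by (rule R_bounded_const_idx[OF bdd_op_bl])

lemma lin_op_uminus: "lin_op UNIV (\<lambda>x. - (x::'a::cplx_vector))"
  by (simp add: lin_op_def scaleC_minus_right)

lemma bdd_op_uminus: "bdd_op (\<lambda>x. - (x::'a::cplx_normed_vector))"
  by (rule bdd_opI[OF lin_op_uminus, of 1]) simp

lemma bdd_invertible_neg:
  assumes "bdd_invertible S (\<lambda>x. - F x)"
  shows "bdd_invertible S F"
proof -
  let ?H = "inv_into S (\<lambda>x. - F x)"
  have H: "bdd_op ?H" "\<And>u. ?H u \<in> S" "\<And>u. - F (?H u) = u" "\<And>x. x \<in> S \<Longrightarrow> ?H (- F x) = x"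
    using bdd_invertibleD[OF assms] by auto
  show ?thesis
  proof (rule bdd_invertibleI(1)[of "\<lambda>u. ?H (- u)"])
    show "bdd_op (\<lambda>u. ?H (- u))" by (rule bdd_op_compose[OF H(1) bdd_op_uminus])
    show "?H (- u) \<in> S" for u by (rule H(2))
    show "F (?H (- u)) = u" for u using H(3)[of "- u"] by (simp add: neg_equal_iff_equal)
    show "x \<in> S \<Longrightarrow> ?H (- F x) = x" for x by (rule H(4))
  qed
qed

lemma bdd_invertible_negI:
  assumes "bdd_invertible S F"
  shows "bdd_invertible S (\<lambda>x. - F x)"
proof -
  let ?H = "inv_into S F"
  have H: "bdd_op ?H" "\<And>u. ?H u \<in> S" "\<And>u. F (?H u) = u" "\<And>x. x \<in> S \<Longrightarrow> ?H (F x) = x"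
    using bdd_invertibleD[OF assms] by auto
  show ?thesis
  proof (rule bdd_invertibleI(1)[of "\<lambda>u. ?H (- u)"])
    show "bdd_op (\<lambda>u. ?H (- u))" by (rule bdd_op_compose[OF H(1) bdd_op_uminus])
    show "?H (- u) \<in> S" for u by (rule H(2))
    show "- F (?H (- u)) = u" for u using H(3)[of "- u"] by simp
    show "x \<in> S \<Longrightarrow> ?H (- (- F x)) = x" for x using H(4) by simp
  qed
qed

lemma res_zero_iff: "0 \<in> resolvent_set S T \<longleftrightarrow> bdd_invertible S T"
  unfolding resolvent_set_def using bdd_invertible_neg bdd_invertible_negI by fastforce

lemma swap_inverse:
  fixes P :: "'b::cplx_normed_vector \<Rightarrow> 'a::cplx_normed_vector" and Q :: "'a \<Rightarrow> 'b"
  assumes P: "bdd_op P" and Q: "bdd_op Q"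
    and inv2: "bdd_invertible UNIV (\<lambda>y. y - Q (P y))"
  shows "bdd_invertible UNIV (\<lambda>x. x - P (Q x))"
    "\<And>x. inv (\<lambda>x. x - P (Q x)) x = x + P (inv (\<lambda>y. y - Q (P y)) (Q x))"
proof -
  let ?N = "inv (\<lambda>y. y - Q (P y))"
  have N: "bdd_op ?N" "\<And>u. ?N u - Q (P (?N u)) = u" "\<And>y. ?N (y - Q (P y)) = y"
    using bdd_invertibleD[OF inv2] by auto
  have lP: "lin_op UNIV P" and lQ: "lin_op UNIV Q" and lN: "lin_op UNIV ?N"
    using P Q N(1) by (auto intro: bdd_op_lin)
  define G where "G x = x + P (?N (Q x))" for x
  have bG: "bdd_op G" unfolding G_def
    by (rule bdd_op_plus[OF bdd_op_id bdd_op_compose[OF P bdd_op_compose[OF N(1) Q]]])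
  have 1: "G x - P (Q (G x)) = x" for x
  proof -
    have "Q (G x) = Q x + Q (P (?N (Q x)))" unfolding G_def by (rule lin_op_add[OF lQ UNIV_I UNIV_I])
    also have "Q (P (?N (Q x))) = ?N (Q x) - Q x" using N(2)[of "Q x"] by (simp add: algebra_simps)
    finally have "Q (G x) = ?N (Q x)" by simp
    then show ?thesis unfolding G_def by simp
  qed
  have 2: "G (x - P (Q x)) = x" for x
  proof -
    have "Q (x - P (Q x)) = Q x - Q (P (Q x))" by (rule lin_op_diff[OF lQ UNIV_I UNIV_I])
    then have "?N (Q (x - P (Q x))) = Q x" using N(3) by simp
    then show ?thesis unfolding G_def by simp
  qed
  have "bdd_invertible UNIV (\<lambda>x. x - P (Q x))" "\<And>u. inv_into UNIV (\<lambda>x. x - P (Q x)) u = G u"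
    using bdd_invertibleI[of G UNIV "\<lambda>x. x - P (Q x)", OF bG _ 1 2] by auto
  then show "bdd_invertible UNIV (\<lambda>x. x - P (Q x))"
    "\<And>x. inv (\<lambda>x. x - P (Q x)) x = x + P (inv (\<lambda>y. y - Q (P y)) (Q x))"
    by (auto simp: G_def)
qed

locale blk_setting =
  fixes SA :: "'a::{cplx_normed_vector, banach} set" and A :: "'a \<Rightarrow> 'a"
    and SD :: "'b::{cplx_normed_vector, banach} set" and D :: "'b \<Rightarrow> 'b"
    and SB :: "'b set" and B :: "'b \<Rightarrow> 'a"
    and SC :: "'a set" and C :: "'a \<Rightarrow> 'b"
    and cA cD L :: real
  assumes A_cl: "closed_op SA A" and A_dense: "closure SA = UNIV"
    and D_cl: "closed_op SD D" and D_dense: "closure SD = UNIV"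
    and B_lin: "lin_op SB B" and C_lin: "lin_op SC C"
    and dom_D: "SD \<subseteq> SB" and dom_A: "SA \<subseteq> SC"
    and cA: "cA \<ge> 0" and cD: "cD \<ge> 0" and L: "L \<ge> 0"
    and C_rel: "\<forall>x\<in>SA. norm (C x) \<le> cA * norm (A x) + L * norm x"
    and B_rel: "\<forall>y\<in>SD. norm (B y) \<le> cD * norm (D y) + L * norm y"
    and A_inv: "bdd_invertible SA A" and D_inv: "bdd_invertible SD D"
begin

lemma linA: "lin_op SA A" using A_cl by (simp add: closed_op_def)
lemma linD: "lin_op SD D" using D_cl by (simp add: closed_op_def)

abbreviation "Ainv \<equiv> inv_into SA A"
abbreviation "Dinv \<equiv> inv_into SD D"

lemma Ainv: "bdd_op Ainv" "\<And>u. Ainv u \<in> SA" "\<And>u. A (Ainv u) = u" "\<And>x. x \<in> SA \<Longrightarrow> Ainv (A x) = x"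
  using bdd_invertibleD[OF A_inv] by auto
lemma Dinv: "bdd_op Dinv" "\<And>u. Dinv u \<in> SD" "\<And>u. D (Dinv u) = u" "\<And>x. x \<in> SD \<Longrightarrow> Dinv (D x) = x"
  using bdd_invertibleD[OF D_inv] by auto

lemma C_add: "x \<in> SA \<Longrightarrow> y \<in> SA \<Longrightarrow> C (x + y) = C x + C y"
  using lin_op_add[OF C_lin] dom_A by blast
lemma C_scale: "x \<in> SA \<Longrightarrow> C (c *\<^sub>C x) = c *\<^sub>C C x"
  using lin_op_scaleC[OF C_lin] dom_A by blast
lemma B_add: "x \<in> SD \<Longrightarrow> y \<in> SD \<Longrightarrow> B (x + y) = B x + B y"
  using lin_op_add[OF B_lin] dom_D by blast
lemma B_scale: "x \<in> SD \<Longrightarrow> B (c *\<^sub>C x) = c *\<^sub>C B x"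
  using lin_op_scaleC[OF B_lin] dom_D by blast

definition CA :: "'a \<Rightarrow> 'b" where "CA u = C (Ainv u)"
definition BD :: "'b \<Rightarrow> 'a" where "BD v = B (Dinv v)"

lemma bdd_CA: "bdd_op CA"
proof -
  obtain K where K: "K \<ge> 0" "\<And>u. norm (Ainv u) \<le> K * norm u"
    using bdd_op_bound[OF Ainv(1)] by blast
  have lI: "lin_op UNIV Ainv" by (rule bdd_op_lin[OF Ainv(1)])
  have lin: "lin_op UNIV CA"
  proof (rule lin_opI)
    fix x y show "CA (x + y) = CA x + CA y"
      unfolding CA_def using lin_op_add[OF lI UNIV_I UNIV_I, of x y] C_add[OF Ainv(2) Ainv(2)] by simp
  next
    fix c x show "CA (c *\<^sub>C x) = c *\<^sub>C CA x"
      unfolding CA_def using lin_op_scaleC[OF lI UNIV_I, of c x] C_scale[OF Ainv(2)] by simp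
  qed simp
  have bnd: "norm (CA u) \<le> (cA + L * K) * norm u" for u
  proof -
    have "norm (CA u) \<le> cA * norm (A (Ainv u)) + L * norm (Ainv u)"
      unfolding CA_def using C_rel Ainv(2) by blast
    also have "\<dots> \<le> cA * norm u + L * (K * norm u)"
      using Ainv(3) mult_left_mono[OF K(2) L] by simp
    finally show ?thesis by (simp add: algebra_simps)
  qed
  show ?thesis by (rule bdd_opI[OF lin bnd])
qed

lemma bdd_BD: "bdd_op BD"
proof -
  obtain K where K: "K \<ge> 0" "\<And>u. norm (Dinv u) \<le> K * norm u"
    using bdd_op_bound[OF Dinv(1)] by blast
  have lI: "lin_op UNIV Dinv" by (rule bdd_op_lin[OF Dinv(1)])
  have lin: "lin_op UNIV BD"
  proof (rule lin_opI)
    fix x y show "BD (x + y) = BD x + BD y"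
      unfolding BD_def using lin_op_add[OF lI UNIV_I UNIV_I, of x y] B_add[OF Dinv(2) Dinv(2)] by simp
  next
    fix c x show "BD (c *\<^sub>C x) = c *\<^sub>C BD x"
      unfolding BD_def using lin_op_scaleC[OF lI UNIV_I, of c x] B_scale[OF Dinv(2)] by simp
  qed simp
  have bnd: "norm (BD u) \<le> (cD + L * K) * norm u" for u
  proof -
    have "norm (BD u) \<le> cD * norm (D (Dinv u)) + L * norm (Dinv u)"
      unfolding BD_def using B_rel Dinv(2) by blast
    also have "\<dots> \<le> cD * norm u + L * (K * norm u)"
      using Dinv(3) mult_left_mono[OF K(2) L] by simp
    finally show ?thesis by (simp add: algebra_simps)
  qed
  show ?thesis by (rule bdd_opI[OF lin bnd])
qed

abbreviation "RA z \<equiv> resolvent SA A z"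
abbreviation "RD z \<equiv> resolvent SD D z"

lemma RA: assumes "z \<in> resolvent_set SA A"
  shows "bdd_op (RA z)" "\<And>u. RA z u \<in> SA" "\<And>u. z *\<^sub>C RA z u - A (RA z u) = u"
    "\<And>u. A (RA z u) = z *\<^sub>C RA z u - u" "\<And>x. x \<in> SA \<Longrightarrow> RA z (z *\<^sub>C x - A x) = x"
proof -
  show "bdd_op (RA z)" "\<And>u. RA z u \<in> SA" "\<And>u. z *\<^sub>C RA z u - A (RA z u) = u"
    "\<And>x. x \<in> SA \<Longrightarrow> RA z (z *\<^sub>C x - A x) = x"
    using resolventD[OF assms] by auto
  fix u
  have "z *\<^sub>C RA z u - A (RA z u) = u" using resolventD(3)[OF assms] .
  then show "A (RA z u) = z *\<^sub>C RA z u - u" by (simp add: eq_diff_eq diff_eq_eq add.commute)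
qed

lemma RD: assumes "z \<in> resolvent_set SD D"
  shows "bdd_op (RD z)" "\<And>u. RD z u \<in> SD" "\<And>u. z *\<^sub>C RD z u - D (RD z u) = u"
    "\<And>u. D (RD z u) = z *\<^sub>C RD z u - u" "\<And>x. x \<in> SD \<Longrightarrow> RD z (z *\<^sub>C x - D x) = x"
proof -
  show "bdd_op (RD z)" "\<And>u. RD z u \<in> SD" "\<And>u. z *\<^sub>C RD z u - D (RD z u) = u"
    "\<And>x. x \<in> SD \<Longrightarrow> RD z (z *\<^sub>C x - D x) = x"
    using resolventD[OF assms] by auto
  fix u
  have "z *\<^sub>C RD z u - D (RD z u) = u" using resolventD(3)[OF assms] .
  then show "D (RD z u) = z *\<^sub>C RD z u - u" by (simp add: eq_diff_eq diff_eq_eq add.commute)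
qed

definition P :: "complex \<Rightarrow> 'b \<Rightarrow> 'a" where "P z v = B (RD z v)"
definition Q :: "complex \<Rightarrow> 'a \<Rightarrow> 'b" where "Q z u = C (RA z u)"

lemma P_eq: assumes z: "z \<in> resolvent_set SD D" shows "P z v = BD (z *\<^sub>C RD z v - v)"
proof -
  have "Dinv (z *\<^sub>C RD z v - v) = RD z v"
    using Dinv(4)[OF RD(2)[OF z, of v]] RD(4)[OF z, of v] by simp
  then show ?thesis unfolding P_def BD_def by simp
qed
lemma Q_eq: assumes z: "z \<in> resolvent_set SA A" shows "Q z u = CA (z *\<^sub>C RA z u - u)"
proof -
  have "Ainv (z *\<^sub>C RA z u - u) = RA z u"
    using Ainv(4)[OF RA(2)[OF z, of u]] RA(4)[OF z, of u] by simp
  then show ?thesis unfolding Q_def CA_def by simp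
qed

lemma bdd_P: assumes "z \<in> resolvent_set SD D" shows "bdd_op (P z)"
proof -
  have "P z = (\<lambda>v. BD (z *\<^sub>C RD z v - v))" using P_eq[OF assms] by (rule ext)
  moreover have "bdd_op (\<lambda>v. BD (z *\<^sub>C RD z v - v))"
    by (rule bdd_op_compose[OF bdd_BD bdd_op_minus[OF bdd_op_compose[OF bdd_op_scale RD(1)[OF assms]] bdd_op_id]])
  ultimately show ?thesis by simp
qed

lemma bdd_Q: assumes "z \<in> resolvent_set SA A" shows "bdd_op (Q z)"
proof -
  have "Q z = (\<lambda>v. CA (z *\<^sub>C RA z v - v))" using Q_eq[OF assms] by (rule ext)
  moreover have "bdd_op (\<lambda>v. CA (z *\<^sub>C RA z v - v))"
    by (rule bdd_op_compose[OF bdd_CA bdd_op_minus[OF bdd_op_compose[OF bdd_op_scale RA(1)[OF assms]] bdd_op_id]])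
  ultimately show ?thesis by simp
qed

lemma M1_eq: "M1 SA A B C SD D z = (\<lambda>x. x - P z (Q z x))"
  unfolding M1_def P_def Q_def ..
lemma M2_eq: "M2 SA A B C SD D z = (\<lambda>y. y - Q z (P z y))"
  unfolding M2_def P_def Q_def ..

abbreviation "Blk \<equiv> block_op A B C D"

lemma Blk_simp: "Blk (x, y) = (A x + B y, C x + D y)"
  by (simp add: block_op_def)

lemma lin_Blk: "lin_op (SA \<times> SD) Blk"
proof (rule lin_opI)
  show "csubspace (SA \<times> SD)"
    by (rule csubspace_Times[OF lin_op_sub[OF linA] lin_op_sub[OF linD]])
next
  fix p q assume p: "p \<in> SA \<times> SD" and q: "q \<in> SA \<times> SD"
  obtain x1 y1 where p1: "p = (x1, y1)" "x1 \<in> SA" "y1 \<in> SD" using p by auto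
  obtain x2 y2 where q1: "q = (x2, y2)" "x2 \<in> SA" "y2 \<in> SD" using q by auto
  have "A (x1 + x2) = A x1 + A x2" "D (y1 + y2) = D y1 + D y2"
    "B (y1 + y2) = B y1 + B y2" "C (x1 + x2) = C x1 + C x2"
    using lin_op_add[OF linA p1(2) q1(2)] lin_op_add[OF linD p1(3) q1(3)]
      B_add[OF p1(3) q1(3)] C_add[OF p1(2) q1(2)] by auto
  then show "Blk (p + q) = Blk p + Blk q"
    by (simp add: p1(1) q1(1) Blk_simp algebra_simps)
next
  fix c p assume p: "p \<in> SA \<times> SD"
  obtain x1 y1 where p1: "p = (x1, y1)" "x1 \<in> SA" "y1 \<in> SD" using p by auto
  have "A (c *\<^sub>C x1) = c *\<^sub>C A x1" "D (c *\<^sub>C y1) = c *\<^sub>C D y1"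
    "B (c *\<^sub>C y1) = c *\<^sub>C B y1" "C (c *\<^sub>C x1) = c *\<^sub>C C x1"
    using lin_op_scaleC[OF linA p1(2)] lin_op_scaleC[OF linD p1(3)] B_scale[OF p1(3)] C_scale[OF p1(2)]
    by auto
  then show "Blk (c *\<^sub>C p) = c *\<^sub>C Blk p"
    by (simp add: p1(1) Blk_simp scaleC_Pair scaleC_add_right)
qed

lemma fwd:
  assumes zA: "z \<in> resolvent_set SA A" and zD: "z \<in> resolvent_set SD D"
    and M: "bdd_invertible UNIV (\<lambda>x. x - P z (Q z x))"
  defines "N \<equiv> inv (\<lambda>x. x - P z (Q z x))"
  shows "z \<in> resolvent_set (SA \<times> SD) Blk"
    "resolvent (SA \<times> SD) Blk z = (\<lambda>p. (RA z (N (fst p + P z (snd p))),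
        RD z (snd p + Q z (N (fst p + P z (snd p))))))"
proof -
  have N: "bdd_op N" "\<And>u. N u - P z (Q z (N u)) = u" "\<And>x. N (x - P z (Q z x)) = x"
    using bdd_invertibleD[OF M] unfolding N_def by auto
  have lP: "lin_op UNIV (P z)" by (rule bdd_op_lin[OF bdd_P[OF zD]])
  define H where "H p = N (fst p + P z (snd p))" for p
  define G where "G p = (RA z (H p), RD z (snd p + Q z (H p)))" for p
  have bH: "bdd_op H" unfolding H_def
    by (rule bdd_op_compose[OF N(1) bdd_op_plus[OF bdd_op_fst bdd_op_compose[OF bdd_P[OF zD] bdd_op_snd]]])
  have bG: "bdd_op G" unfolding G_def
    by (rule bdd_op_pair[OF bdd_op_compose[OF RA(1)[OF zA] bH]
          bdd_op_compose[OF RD(1)[OF zD] bdd_op_plus[OF bdd_op_snd bdd_op_compose[OF bdd_Q[OF zA] bH]]]])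
  have inS: "G p \<in> SA \<times> SD" for p unfolding G_def using RA(2)[OF zA] RD(2)[OF zD] by simp
  have right: "z *\<^sub>C G p - Blk (G p) = p" for p
  proof (cases p)
    case (Pair u1 u2)
    define w where "w = H p"
    define x where "x = RA z w"
    define y where "y = RD z (u2 + Q z w)"
    have Gp: "G p = (x, y)" by (simp add: G_def Pair x_def y_def w_def)
    have e1: "z *\<^sub>C x - A x = w" unfolding x_def by (rule RA(3)[OF zA])
    have e2: "z *\<^sub>C y - D y = u2 + Q z w" unfolding y_def by (rule RD(3)[OF zD])
    have By: "B y = P z u2 + P z (Q z w)"
      unfolding y_def P_def[symmetric] by (rule lin_op_add[OF lP UNIV_I UNIV_I])
    have Mw: "w - P z (Q z w) = u1 + P z u2" using N(2)[of "u1 + P z u2"] by (simp add: w_def H_def Pair)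
    have Cx: "C x = Q z w" by (simp add: Q_def x_def)
    have c1: "z *\<^sub>C x - (A x + B y) = u1"
    proof -
      have "z *\<^sub>C x - (A x + B y) = (z *\<^sub>C x - A x) - B y" by (simp add: algebra_simps)
      also have "\<dots> = w - (P z u2 + P z (Q z w))" using e1 By by simp
      also have "\<dots> = (w - P z (Q z w)) - P z u2" by (simp add: algebra_simps)
      also have "\<dots> = u1" using Mw by simp
      finally show ?thesis .
    qed
    have c2: "z *\<^sub>C y - (C x + D y) = u2"
    proof -
      have "z *\<^sub>C y - (C x + D y) = (z *\<^sub>C y - D y) - C x" by (simp add: algebra_simps)
      also have "\<dots> = u2" using e2 Cx by simp
      finally show ?thesis .
    qed
    have "z *\<^sub>C G p - Blk (G p) = (u1, u2)" using c1 c2 by (simp add: Gp Blk_simp scaleC_Pair)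
    then show ?thesis by (simp add: Pair)
  qed
  have left: "G (z *\<^sub>C p - Blk p) = p" if "p \<in> SA \<times> SD" for p
  proof (cases p)
    case (Pair x y)
    with that have x: "x \<in> SA" and y: "y \<in> SD" by auto
    define u1 where "u1 = z *\<^sub>C x - (A x + B y)"
    define u2 where "u2 = z *\<^sub>C y - (C x + D y)"
    have zp: "z *\<^sub>C p - Blk p = (u1, u2)" by (simp add: Pair u1_def u2_def Blk_simp scaleC_Pair)
    define w0 where "w0 = z *\<^sub>C x - A x"
    have RAw0: "RA z w0 = x" unfolding w0_def by (rule RA(5)[OF zA x])
    have Qw0: "Q z w0 = C x" by (simp add: Q_def RAw0)
    have "u2 + C x = z *\<^sub>C y - D y" by (simp add: u2_def algebra_simps)
    then have RDy: "RD z (u2 + C x) = y" using RD(5)[OF zD y] by simp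
    have By: "B y = P z u2 + P z (C x)"
    proof -
      have "B y = P z (u2 + C x)" by (simp add: P_def RDy)
      then show ?thesis using lin_op_add[OF lP UNIV_I UNIV_I] by simp
    qed
    have "u1 + P z u2 = w0 - P z (Q z w0)"
    proof -
      have "u1 + P z u2 = (z *\<^sub>C x - A x) - B y + P z u2" by (simp add: u1_def algebra_simps)
      also have "\<dots> = w0 - (P z u2 + P z (C x)) + P z u2" using By by (simp add: w0_def)
      also have "\<dots> = w0 - P z (C x)" by (simp add: algebra_simps)
      finally show ?thesis using Qw0 by simp
    qed
    then have Hw: "H (u1, u2) = w0" using N(3) by (simp add: H_def)
    have "G (u1, u2) = (x, y)" using Hw RAw0 Qw0 RDy by (simp add: G_def)
    then show ?thesis using zp by (simp add: Pair)
  qed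
  have res: "z \<in> resolvent_set (SA \<times> SD) Blk" "resolvent (SA \<times> SD) Blk z = G"
    using resolvent_setI[OF bG inS right left] by auto
  show "z \<in> resolvent_set (SA \<times> SD) Blk" by (rule res(1))
  show "resolvent (SA \<times> SD) Blk z = (\<lambda>p. (RA z (N (fst p + P z (snd p))),
        RD z (snd p + Q z (N (fst p + P z (snd p))))))"
    using res(2) unfolding G_def H_def by simp
qed

lemma bwd:
  assumes zA: "z \<in> resolvent_set SA A" and zD: "z \<in> resolvent_set SD D"
    and zB: "z \<in> resolvent_set (SA \<times> SD) Blk"
  defines "Rz \<equiv> resolvent (SA \<times> SD) Blk z"
  shows "bij (\<lambda>x. x - P z (Q z x))"
    "\<And>u. inv (\<lambda>x. x - P z (Q z x)) u = z *\<^sub>C fst (Rz (u, 0)) - A (fst (Rz (u, 0)))"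
proof -
  have R: "\<And>p. Rz p \<in> SA \<times> SD" "\<And>p. z *\<^sub>C Rz p - Blk (Rz p) = p"
    "\<And>p. p \<in> SA \<times> SD \<Longrightarrow> Rz (z *\<^sub>C p - Blk p) = p"
    using resolventD[OF zB] unfolding Rz_def by auto
  define N where "N u = z *\<^sub>C fst (Rz (u, 0)) - A (fst (Rz (u, 0)))" for u
  let ?M = "\<lambda>x. x - P z (Q z x)"
  have MN: "?M (N u) = u" for u
  proof -
    obtain x y where xy: "Rz (u, 0) = (x, y)" by (cases "Rz (u, 0)")
    have x: "x \<in> SA" and y: "y \<in> SD" using R(1)[of "(u, 0)"] xy by auto
    have eq1: "z *\<^sub>C x - (A x + B y) = u" and eq2: "z *\<^sub>C y - (C x + D y) = 0"
      using R(2)[of "(u, 0)"] xy by (simp_all add: Blk_simp scaleC_Pair)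
    have Nu: "N u = z *\<^sub>C x - A x" by (simp add: N_def xy)
    have RAx: "RA z (N u) = x" using RA(5)[OF zA x] Nu by simp
    have Qw: "Q z (N u) = C x" by (simp add: Q_def RAx)
    have "z *\<^sub>C y - D y = (z *\<^sub>C y - (C x + D y)) + C x" by (simp add: algebra_simps)
    then have "z *\<^sub>C y - D y = C x" using eq2 by simp
    then have "RD z (C x) = y" using RD(5)[OF zD y] by simp
    then have PCx: "P z (C x) = B y" by (simp add: P_def)
    have "?M (N u) = (z *\<^sub>C x - A x) - B y" using Nu Qw PCx by simp
    also have "\<dots> = z *\<^sub>C x - (A x + B y)" by (simp add: algebra_simps)
    finally show ?thesis using eq1 by simp
  qed
  have NM: "N (?M w) = w" for w
  proof -
    define x where "x = RA z w"
    define y where "y = RD z (Q z w)"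
    have x: "x \<in> SA" and y: "y \<in> SD" using RA(2)[OF zA] RD(2)[OF zD] by (auto simp: x_def y_def)
    have ex: "z *\<^sub>C x - A x = w" unfolding x_def by (rule RA(3)[OF zA])
    have ey: "z *\<^sub>C y - D y = C x" unfolding y_def x_def Q_def[symmetric] by (rule RD(3)[OF zD])
    have By: "B y = P z (Q z w)" by (simp add: P_def y_def)
    have c1: "z *\<^sub>C x - (A x + B y) = ?M w"
    proof -
      have "z *\<^sub>C x - (A x + B y) = (z *\<^sub>C x - A x) - B y" by (simp add: algebra_simps)
      then show ?thesis using ex By by simp
    qed
    have c2: "z *\<^sub>C y - (C x + D y) = 0"
    proof -
      have "z *\<^sub>C y - (C x + D y) = (z *\<^sub>C y - D y) - C x" by (simp add: algebra_simps)
      then show ?thesis using ey by simp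
    qed
    have "z *\<^sub>C (x, y) - Blk (x, y) = (?M w, 0)" using c1 c2 by (simp add: Blk_simp scaleC_Pair)
    then have "Rz (?M w, 0) = (x, y)" using R(3)[of "(x, y)"] x y by simp
    then show "N (?M w) = w" using ex by (simp add: N_def)
  qed
  have inj: "inj ?M" by (rule inj_on_inverseI[where g = N]) (rule NM)
  have surj: "surj ?M" by (rule surjI[where f = N]) (rule MN)
  show "bij ?M" using inj surj by (simp add: bij_def)
  show "inv ?M u = z *\<^sub>C fst (Rz (u, 0)) - A (fst (Rz (u, 0)))" for u
    using inv_f_eq[OF inj MN[of u]] by (simp add: N_def)
qed

lemma T0_exists:
  assumes Binv: "bdd_invertible (SA \<times> SD) Blk"
  shows "\<exists>T0. bdd_op T0 \<and> (\<forall>p\<in>SA \<times> SD. A (fst p) = T0 (Blk p))"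
proof -
  let ?I = "inv_into (SA \<times> SD) Blk"
  have I: "bdd_op ?I" "\<And>u. ?I u \<in> SA \<times> SD" "\<And>u. Blk (?I u) = u"
    "\<And>p. p \<in> SA \<times> SD \<Longrightarrow> ?I (Blk p) = p"
    using bdd_invertibleD[OF Binv] by auto
  define G0 where "G0 q = (fst q + BD (snd q), CA (fst q) + snd q)" for q :: "'a \<times> 'b"
  have bG0: "bdd_op G0" unfolding G0_def
    by (rule bdd_op_pair[OF bdd_op_plus[OF bdd_op_fst bdd_op_compose[OF bdd_BD bdd_op_snd]]
          bdd_op_plus[OF bdd_op_compose[OF bdd_CA bdd_op_fst] bdd_op_snd]])
  have G0Blk: "G0 (A x, D y) = Blk (x, y)" if "x \<in> SA" "y \<in> SD" for x y
    using that by (simp add: G0_def Blk_simp BD_def CA_def Ainv(4) Dinv(4))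
  define H where "H u = (A (fst (?I u)), D (snd (?I u)))" for u
  have GH: "G0 (H u) = u" for u
  proof -
    obtain x y where xy: "?I u = (x, y)" by (cases "?I u")
    then have "x \<in> SA" "y \<in> SD" using I(2)[of u] by auto
    then have "G0 (H u) = Blk (x, y)" using G0Blk by (simp add: H_def xy)
    then show ?thesis using I(3)[of u] xy by simp
  qed
  have HG: "H (G0 q) = q" for q
  proof -
    obtain a d where q: "q = (a, d)" by (cases q)
    have "G0 q = G0 (A (Ainv a), D (Dinv d))" by (simp add: q Ainv(3) Dinv(3))
    also have "\<dots> = Blk (Ainv a, Dinv d)" by (rule G0Blk[OF Ainv(2) Dinv(2)])
    finally have "?I (G0 q) = (Ainv a, Dinv d)" using I(4)[of "(Ainv a, Dinv d)"] Ainv(2) Dinv(2) by simp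
    then show ?thesis by (simp add: H_def q Ainv(3) Dinv(3))
  qed
  have inj: "inj G0" by (rule inj_on_inverseI[where g = H]) (rule HG)
  have surj: "surj G0" by (rule surjI[where f = H]) (rule GH)
  have bij: "bij G0" using inj surj by (simp add: bij_def)
  have invG: "inv G0 = H" by (rule ext) (rule inv_f_eq[OF inj GH])
  have bH: "bdd_op H" using bdd_op_inv[OF bG0 bij] invG by simp
  define T0 where "T0 u = fst (H u)" for u
  have bT: "bdd_op T0" unfolding T0_def by (rule bdd_op_compose[OF bdd_op_fst bH])
  have "A (fst p) = T0 (Blk p)" if "p \<in> SA \<times> SD" for p
    using I(4)[OF that] by (simp add: T0_def H_def)
  then show ?thesis using bT by blast
qed

lemma M1_inv_formula:
  assumes zA: "z \<in> resolvent_set SA A" and zD: "z \<in> resolvent_set SD D"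
    and zB: "z \<in> resolvent_set (SA \<times> SD) Blk"
    and T0: "bdd_op T0" "\<forall>p\<in>SA \<times> SD. A (fst p) = T0 (Blk p)"
  defines "Rz \<equiv> resolvent (SA \<times> SD) Blk z"
  shows "bdd_invertible UNIV (M1 SA A B C SD D z)"
    "\<And>u. inv (M1 SA A B C SD D z) u = fst (z *\<^sub>C Rz (u, 0)) - T0 (z *\<^sub>C Rz (u, 0) - (u, 0))"
proof -
  have R: "\<And>p. Rz p \<in> SA \<times> SD" "\<And>p. z *\<^sub>C Rz p - Blk (Rz p) = p" "bdd_op Rz"
    using resolventD[OF zB] unfolding Rz_def by auto
  let ?M = "\<lambda>x. x - P z (Q z x)"
  define G where "G u = fst (z *\<^sub>C Rz (u, 0)) - T0 (z *\<^sub>C Rz (u, 0) - (u, 0))" for u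
  have BR: "Blk (Rz p) = z *\<^sub>C Rz p - p" for p using R(2)[of p] by (simp add: eq_diff_eq diff_eq_eq add.commute)
  have invM: "inv ?M u = G u" for u
  proof -
    have "inv ?M u = z *\<^sub>C fst (Rz (u, 0)) - A (fst (Rz (u, 0)))"
      using bwd(2)[OF zA zD zB] unfolding Rz_def by simp
    also have "A (fst (Rz (u, 0))) = T0 (z *\<^sub>C Rz (u, 0) - (u, 0))"
    proof -
      have "A (fst (Rz (u, 0))) = T0 (Blk (Rz (u, 0)))" by (rule bspec[OF T0(2) R(1)])
      then show ?thesis using BR[of "(u, 0)"] by simp
    qed
    finally show ?thesis by (simp add: G_def scaleC_fst)
  qed
  have bG: "bdd_op G" unfolding G_def
    by (rule bdd_op_minus[OF bdd_op_compose[OF bdd_op_fst bdd_op_compose[OF bdd_op_scale bdd_op_compose[OF R(3) bdd_op_inl]]]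
        bdd_op_compose[OF T0(1) bdd_op_minus[OF bdd_op_compose[OF bdd_op_scale bdd_op_compose[OF R(3) bdd_op_inl]] bdd_op_inl]]])
  have bij: "bij ?M" by (rule bwd(1)[OF zA zD zB])
  have 1: "?M (G u) = u" for u
    using surj_f_inv_f[OF bij_is_surj[OF bij], of u] invM[of u] by simp
  have 2: "G (?M x) = x" for x
    using inv_f_f[OF bij_is_inj[OF bij], of x] invM[of "?M x"] by simp
  have "bdd_invertible UNIV ?M" using bdd_invertibleI(1)[OF bG _ 1 2] by simp
  then show "bdd_invertible UNIV (M1 SA A B C SD D z)" by (simp add: M1_eq)
  show "inv (M1 SA A B C SD D z) u = fst (z *\<^sub>C Rz (u, 0)) - T0 (z *\<^sub>C Rz (u, 0) - (u, 0))" for u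
    using invM[of u] by (simp add: M1_eq G_def)
qed

end

lemma sect_res:
  "sectorial S T \<Longrightarrow> sect_angle S T < \<phi> \<Longrightarrow> \<phi> < pi \<Longrightarrow> z \<in> csector \<phi> \<Longrightarrow> z \<in> resolvent_set S T"
  using sectorial_with_res[OF sect_angle_lt] by blast

lemma sect_ub:
  "sectorial S T \<Longrightarrow> sect_angle S T < \<phi> \<Longrightarrow> \<phi> < pi \<Longrightarrow> ub (\<lambda>z u. z *\<^sub>C resolvent S T z u) (csector \<phi>)"
  using sectorial_with_bound[OF sect_angle_lt] unfolding ub_def by blast

lemma Rsect:
  assumes "R_sectorial S T" "R_angle S T < \<phi>" "\<phi> < pi"
  shows "sect_angle S T < \<phi>" "R_bounded {(\<lambda>y. z *\<^sub>C resolvent S T z y) | z. z \<in> csector \<phi>}"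
proof -
  obtain \<sigma> where \<sigma>: "\<sigma> < \<phi>" "R_sectorial_with S T \<sigma>" using R_angle_lt[OF assms(1,2)] by blast
  then show "sect_angle S T < \<phi>" unfolding R_sectorial_with_def by simp
  have "R_bounded {(\<lambda>y. z *\<^sub>C resolvent S T z y) | z. z \<in> csector \<sigma>}"
    using \<sigma>(2) unfolding R_sectorial_with_def by blast
  then show "R_bounded {(\<lambda>y. z *\<^sub>C resolvent S T z y) | z. z \<in> csector \<phi>}"
    by (rule R_bounded_subset_idx) (rule csector_anti, use \<sigma> in simp)
qed

lemma R_sectorial_sectorial: "R_sectorial S T \<Longrightarrow> sectorial S T"
  unfolding R_sectorial_def R_sectorial_with_def by blast

context blk_setting
begin

lemma zero_res: "0 \<in> resolvent_set SA A" "0 \<in> resolvent_set SD D"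
  by (simp_all add: res_zero_iff A_inv D_inv)

lemma ub_P:
  assumes Z: "Z \<subseteq> resolvent_set SD D" and h: "ub (\<lambda>z u. z *\<^sub>C RD z u) Z"
  shows "ub P Z"
proof (rule ub_cong)
  show "ub (\<lambda>z x. BD (z *\<^sub>C RD z x - x)) Z"
    by (rule ub_comp[OF ub_const[OF bdd_op_bl[OF bdd_BD]] ub_diff[OF h ub_const[OF bounded_linear_ident]]])
  show "P z x = BD (z *\<^sub>C RD z x - x)" if "z \<in> Z" for z x using P_eq Z that by blast
qed

lemma ub_Q:
  assumes Z: "Z \<subseteq> resolvent_set SA A" and h: "ub (\<lambda>z u. z *\<^sub>C RA z u) Z"
  shows "ub Q Z"
proof (rule ub_cong)
  show "ub (\<lambda>z x. CA (z *\<^sub>C RA z x - x)) Z"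
    by (rule ub_comp[OF ub_const[OF bdd_op_bl[OF bdd_CA]] ub_diff[OF h ub_const[OF bounded_linear_ident]]])
  show "Q z x = CA (z *\<^sub>C RA z x - x)" if "z \<in> Z" for z x using Q_eq Z that by blast
qed

lemma R_P:
  assumes Z: "Z \<subseteq> resolvent_set SD D" and h: "R_bounded {(\<lambda>u. z *\<^sub>C RD z u) | z. z \<in> Z}"
  shows "R_bounded {P z | z. z \<in> Z}"
proof (rule R_bounded_cong_idx)
  show "R_bounded {(\<lambda>x. BD (z *\<^sub>C RD z x - x)) | z. z \<in> Z}"
    by (rule R_bounded_comp_idx[OF R_bounded_const_bdd[OF bdd_BD] R_bounded_diff_idx[OF h R_bounded_const_bdd[OF bdd_op_id]]])
  show "P z x = BD (z *\<^sub>C RD z x - x)" if "z \<in> Z" for z x using P_eq Z that by blast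
qed

lemma R_Q:
  assumes Z: "Z \<subseteq> resolvent_set SA A" and h: "R_bounded {(\<lambda>u. z *\<^sub>C RA z u) | z. z \<in> Z}"
  shows "R_bounded {Q z | z. z \<in> Z}"
proof (rule R_bounded_cong_idx)
  show "R_bounded {(\<lambda>x. CA (z *\<^sub>C RA z x - x)) | z. z \<in> Z}"
    by (rule R_bounded_comp_idx[OF R_bounded_const_bdd[OF bdd_CA] R_bounded_diff_idx[OF h R_bounded_const_bdd[OF bdd_op_id]]])
  show "Q z x = CA (z *\<^sub>C RA z x - x)" if "z \<in> Z" for z x using Q_eq Z that by blast
qed

lemma ub_blk:
  assumes Z: "\<And>z. z \<in> Z \<Longrightarrow> z \<in> resolvent_set SA A \<and> z \<in> resolvent_set SD D
      \<and> bdd_invertible UNIV (M1 SA A B C SD D z)"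
    and uA: "ub (\<lambda>z u. z *\<^sub>C RA z u) Z" and uD: "ub (\<lambda>z u. z *\<^sub>C RD z u) Z"
    and uN: "ub (\<lambda>z. inv (M1 SA A B C SD D z)) Z"
  shows "ub (\<lambda>z p. z *\<^sub>C resolvent (SA \<times> SD) Blk z p) Z"
proof -
  have ZA: "Z \<subseteq> resolvent_set SA A" and ZD: "Z \<subseteq> resolvent_set SD D" using Z by auto
  have uP: "ub P Z" by (rule ub_P[OF ZD uD])
  have uQ: "ub Q Z" by (rule ub_Q[OF ZA uA])
  have uN': "ub (\<lambda>z. inv (\<lambda>x. x - P z (Q z x))) Z" using uN by (simp add: M1_eq)
  have h1: "ub (\<lambda>z p. inv (\<lambda>x. x - P z (Q z x)) (fst p + P z (snd p))) Z"
    by (rule ub_comp[OF uN' ub_add[OF ub_const[OF bounded_linear_fst] ub_comp[OF uP ub_const[OF bounded_linear_snd]]]])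
  have h2: "ub (\<lambda>z p. z *\<^sub>C RA z (inv (\<lambda>x. x - P z (Q z x)) (fst p + P z (snd p)))) Z"
    by (rule ub_comp[OF uA h1])
  have h3: "ub (\<lambda>z p. z *\<^sub>C RD z (snd p + Q z (inv (\<lambda>x. x - P z (Q z x)) (fst p + P z (snd p))))) Z"
    by (rule ub_comp[OF uD ub_add[OF ub_const[OF bounded_linear_snd] ub_comp[OF uQ h1]]])
  show ?thesis
  proof (rule ub_cong[OF ub_pair[OF h2 h3]])
    fix z p assume z: "z \<in> Z"
    have "bdd_invertible UNIV (\<lambda>x. x - P z (Q z x))" using Z[OF z] by (simp add: M1_eq)
    then show "z *\<^sub>C resolvent (SA \<times> SD) Blk z p =
        (z *\<^sub>C RA z (inv (\<lambda>x. x - P z (Q z x)) (fst p + P z (snd p))),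
         z *\<^sub>C RD z (snd p + Q z (inv (\<lambda>x. x - P z (Q z x)) (fst p + P z (snd p)))))"
      using fwd(2)[of z] Z[OF z] by (simp add: scaleC_Pair)
  qed
qed

lemma R_blk:
  assumes Z: "\<And>z. z \<in> Z \<Longrightarrow> z \<in> resolvent_set SA A \<and> z \<in> resolvent_set SD D
      \<and> bdd_invertible UNIV (M1 SA A B C SD D z)"
    and uA: "R_bounded {(\<lambda>u. z *\<^sub>C RA z u) | z. z \<in> Z}"
    and uD: "R_bounded {(\<lambda>u. z *\<^sub>C RD z u) | z. z \<in> Z}"
    and uN: "R_bounded {inv (M1 SA A B C SD D z) | z. z \<in> Z}"
  shows "R_bounded {(\<lambda>p. z *\<^sub>C resolvent (SA \<times> SD) Blk z p) | z. z \<in> Z}"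
proof -
  have ZA: "Z \<subseteq> resolvent_set SA A" and ZD: "Z \<subseteq> resolvent_set SD D" using Z by auto
  have uP: "R_bounded {P z | z. z \<in> Z}" by (rule R_P[OF ZD uD])
  have uQ: "R_bounded {Q z | z. z \<in> Z}" by (rule R_Q[OF ZA uA])
  have uN': "R_bounded {inv (\<lambda>x. x - P z (Q z x)) | z. z \<in> Z}" using uN by (simp add: M1_eq)
  have h1: "R_bounded {(\<lambda>p. inv (\<lambda>x. x - P z (Q z x)) (fst p + P z (snd p))) | z. z \<in> Z}"
    by (rule R_bounded_comp_idx[OF uN' R_bounded_add_idx[OF R_bounded_const_bdd[OF bdd_op_fst]
          R_bounded_comp_idx[OF uP R_bounded_const_bdd[OF bdd_op_snd]]]])
  have h2: "R_bounded {(\<lambda>p. z *\<^sub>C RA z (inv (\<lambda>x. x - P z (Q z x)) (fst p + P z (snd p)))) | z. z \<in> Z}"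
    by (rule R_bounded_comp_idx[OF uA h1])
  have h3: "R_bounded {(\<lambda>p. z *\<^sub>C RD z (snd p + Q z (inv (\<lambda>x. x - P z (Q z x)) (fst p + P z (snd p))))) | z. z \<in> Z}"
    by (rule R_bounded_comp_idx[OF uD R_bounded_add_idx[OF R_bounded_const_bdd[OF bdd_op_snd]
          R_bounded_comp_idx[OF uQ h1]]])
  show ?thesis
  proof (rule R_bounded_cong_idx[OF R_bounded_pair_idx[OF h2 h3]])
    fix z p assume z: "z \<in> Z"
    have "bdd_invertible UNIV (\<lambda>x. x - P z (Q z x))" using Z[OF z] by (simp add: M1_eq)
    then show "z *\<^sub>C resolvent (SA \<times> SD) Blk z p =
        (z *\<^sub>C RA z (inv (\<lambda>x. x - P z (Q z x)) (fst p + P z (snd p))),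
         z *\<^sub>C RD z (snd p + Q z (inv (\<lambda>x. x - P z (Q z x)) (fst p + P z (snd p)))))"
      using fwd(2)[of z] Z[OF z] by (simp add: scaleC_Pair)
  qed
qed

lemma ub_M1inv:
  assumes Z: "\<And>z. z \<in> Z \<Longrightarrow> z \<in> resolvent_set SA A \<and> z \<in> resolvent_set SD D
      \<and> z \<in> resolvent_set (SA \<times> SD) Blk"
    and T0: "bdd_op T0" "\<forall>p\<in>SA \<times> SD. A (fst p) = T0 (Blk p)"
    and uB: "ub (\<lambda>z p. z *\<^sub>C resolvent (SA \<times> SD) Blk z p) Z"
  shows "ub (\<lambda>z. inv (M1 SA A B C SD D z)) Z"
proof -
  have inl: "bounded_linear (\<lambda>x::'a. (x, 0::'b))" by (rule bdd_op_bl[OF bdd_op_inl])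
  have f0: "ub (\<lambda>z u. z *\<^sub>C resolvent (SA \<times> SD) Blk z (u, 0)) Z"
    by (rule ub_comp[OF uB ub_const[OF inl]])
  have f1: "ub (\<lambda>z u. fst (z *\<^sub>C resolvent (SA \<times> SD) Blk z (u, 0))) Z"
    by (rule ub_comp[OF ub_const[OF bounded_linear_fst] f0])
  have f2: "ub (\<lambda>z u. T0 (z *\<^sub>C resolvent (SA \<times> SD) Blk z (u, 0) - (u, 0))) Z"
    by (rule ub_comp[OF ub_const[OF bdd_op_bl[OF T0(1)]] ub_diff[OF f0 ub_const[OF inl]]])
  show ?thesis
  proof (rule ub_cong[OF ub_diff[OF f1 f2]])
    fix z x assume z: "z \<in> Z"
    show "inv (M1 SA A B C SD D z) x = fst (z *\<^sub>C resolvent (SA \<times> SD) Blk z (x, 0))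
        - T0 (z *\<^sub>C resolvent (SA \<times> SD) Blk z (x, 0) - (x, 0))"
      using M1_inv_formula(2)[of z T0 x] Z[OF z] T0 by simp
  qed
qed

lemma R_M1inv:
  assumes Z: "\<And>z. z \<in> Z \<Longrightarrow> z \<in> resolvent_set SA A \<and> z \<in> resolvent_set SD D
      \<and> z \<in> resolvent_set (SA \<times> SD) Blk"
    and T0: "bdd_op T0" "\<forall>p\<in>SA \<times> SD. A (fst p) = T0 (Blk p)"
    and uB: "R_bounded {(\<lambda>p. z *\<^sub>C resolvent (SA \<times> SD) Blk z p) | z. z \<in> Z}"
  shows "R_bounded {inv (M1 SA A B C SD D z) | z. z \<in> Z}"
proof -
  have f0: "R_bounded {(\<lambda>u. z *\<^sub>C resolvent (SA \<times> SD) Blk z (u, 0)) | z. z \<in> Z}"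
    by (rule R_bounded_comp_idx[OF uB R_bounded_const_bdd[OF bdd_op_inl]])
  have f1: "R_bounded {(\<lambda>u. fst (z *\<^sub>C resolvent (SA \<times> SD) Blk z (u, 0))) | z. z \<in> Z}"
    by (rule R_bounded_comp_idx[OF R_bounded_const_bdd[OF bdd_op_fst] f0])
  have f2: "R_bounded {(\<lambda>u. T0 (z *\<^sub>C resolvent (SA \<times> SD) Blk z (u, 0) - (u, 0))) | z. z \<in> Z}"
    by (rule R_bounded_comp_idx[OF R_bounded_const_bdd[OF T0(1)] R_bounded_diff_idx[OF f0 R_bounded_const_bdd[OF bdd_op_inl]]])
  show ?thesis
  proof (rule R_bounded_cong_idx[OF R_bounded_diff_idx[OF f1 f2]])
    fix z x assume z: "z \<in> Z"
    show "inv (M1 SA A B C SD D z) x = fst (z *\<^sub>C resolvent (SA \<times> SD) Blk z (x, 0))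
        - T0 (z *\<^sub>C resolvent (SA \<times> SD) Blk z (x, 0) - (x, 0))"
      using M1_inv_formula(2)[of z T0 x] Z[OF z] T0 by simp
  qed
qed

end

context blk_setting
begin

lemma a_fwd:
  assumes sA: "sectorial SA A" and sD: "sectorial SD D"
    and psi: "max (sect_angle SA A) (sect_angle SD D) \<le> \<psi>" "\<psi> < pi"
    and sB: "sectorial (SA \<times> SD) Blk" and iB: "bdd_invertible (SA \<times> SD) Blk"
    and aB: "sect_angle (SA \<times> SD) Blk \<le> \<psi>"
  shows "\<forall>\<phi>. \<psi> < \<phi> \<and> \<phi> < pi \<longrightarrow>
             (\<forall>z\<in>csector \<phi> \<union> {0}. bdd_invertible UNIV (M1 SA A B C SD D z))
             \<and> (\<exists>K. \<forall>z\<in>csector \<phi>. onorm (inv (M1 SA A B C SD D z)) \<le> K)"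
proof (intro allI impI)
  fix \<phi> assume \<phi>: "\<psi> < \<phi> \<and> \<phi> < pi"
  obtain T0 where T0: "bdd_op T0" "\<forall>p\<in>SA \<times> SD. A (fst p) = T0 (Blk p)"
    using T0_exists[OF iB] by blast
  have ltA: "sect_angle SA A < \<phi>" and ltD: "sect_angle SD D < \<phi>" using psi \<phi> by auto
  have ltB: "sect_angle (SA \<times> SD) Blk < \<phi>" using aB \<phi> by linarith
  have zres: "z \<in> resolvent_set SA A \<and> z \<in> resolvent_set SD D \<and> z \<in> resolvent_set (SA \<times> SD) Blk"
    if "z \<in> csector \<phi> \<union> {0}" for z
  proof (cases "z = 0")
    case True then show ?thesis using zero_res iB by (simp add: res_zero_iff)
  next
    case False
    then have z: "z \<in> csector \<phi>" using that by simp
    show ?thesis using sect_res[OF sA ltA _ z] sect_res[OF sD ltD _ z] sect_res[OF sB ltB _ z] \<phi> by simp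
  qed
  have inv: "\<forall>z\<in>csector \<phi> \<union> {0}. bdd_invertible UNIV (M1 SA A B C SD D z)"
    using M1_inv_formula(1)[OF _ _ _ T0] zres by blast
  have ubB: "ub (\<lambda>z p. z *\<^sub>C resolvent (SA \<times> SD) Blk z p) (csector \<phi>)"
    using sect_ub[OF sB ltB] \<phi> by simp
  have "ub (\<lambda>z. inv (M1 SA A B C SD D z)) (csector \<phi>)"
    by (rule ub_M1inv[OF _ T0 ubB]) (use zres in blast)
  then have "\<exists>K. \<forall>z\<in>csector \<phi>. onorm (inv (M1 SA A B C SD D z)) \<le> K"
    by (rule ub_onorm) (use inv bdd_invertibleD(1) in blast)
  with inv show "(\<forall>z\<in>csector \<phi> \<union> {0}. bdd_invertible UNIV (M1 SA A B C SD D z))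
             \<and> (\<exists>K. \<forall>z\<in>csector \<phi>. onorm (inv (M1 SA A B C SD D z)) \<le> K)" by blast
qed

lemma a_bwd:
  assumes sA: "sectorial SA A" and sD: "sectorial SD D"
    and psi: "max (sect_angle SA A) (sect_angle SD D) \<le> \<psi>" "\<psi> < pi"
    and H1: "\<forall>\<phi>. \<psi> < \<phi> \<and> \<phi> < pi \<longrightarrow>
             (\<forall>z\<in>csector \<phi> \<union> {0}. bdd_invertible UNIV (M1 SA A B C SD D z))
             \<and> (\<exists>K. \<forall>z\<in>csector \<phi>. onorm (inv (M1 SA A B C SD D z)) \<le> K)"
  shows "sectorial (SA \<times> SD) Blk \<and> bdd_invertible (SA \<times> SD) Blk \<and> sect_angle (SA \<times> SD) Blk \<le> \<psi>"
proof -
  define \<phi>0 where "\<phi>0 = (\<psi> + pi) / 2"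
  have \<phi>0: "\<psi> < \<phi>0" "\<phi>0 < pi" using psi(2) by (auto simp: \<phi>0_def)
  have "bdd_invertible UNIV (\<lambda>x. x - P 0 (Q 0 x))" using H1 \<phi>0 by (simp add: M1_eq)
  then have "0 \<in> resolvent_set (SA \<times> SD) Blk" using fwd(1)[OF zero_res] by blast
  then have iB: "bdd_invertible (SA \<times> SD) Blk" by (simp add: res_zero_iff)
  have surjB: "Blk ` (SA \<times> SD) = UNIV"
    using iB unfolding bdd_invertible_def by (simp add: bij_betw_imp_surj_on)
  have nnA: "0 \<le> sect_angle SA A" by (rule sect_angle_nonneg[OF sA])
  have sw: "sectorial_with (SA \<times> SD) Blk \<phi>" if \<phi>: "\<psi> < \<phi>" "\<phi> < pi" for \<phi>
  proof -
    have ltA: "sect_angle SA A < \<phi>" and ltD: "sect_angle SD D < \<phi>" using psi \<phi> by auto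
    have zr: "z \<in> resolvent_set SA A \<and> z \<in> resolvent_set SD D \<and> bdd_invertible UNIV (M1 SA A B C SD D z)"
      if "z \<in> csector \<phi>" for z
      using sect_res[OF sA ltA \<phi>(2) that] sect_res[OF sD ltD \<phi>(2) that] H1 \<phi> that by blast
    have zB: "z \<in> resolvent_set (SA \<times> SD) Blk" if "z \<in> csector \<phi>" for z
      using zr[OF that] fwd(1)[of z] by (simp add: M1_eq)
    obtain KN where KN: "\<forall>z\<in>csector \<phi>. onorm (inv (M1 SA A B C SD D z)) \<le> KN" using H1 \<phi> by blast
    have uN: "ub (\<lambda>z. inv (M1 SA A B C SD D z)) (csector \<phi>)"
      by (rule onorm_ub) (use KN zr bdd_invertibleD(1) in blast)+
    have ub: "ub (\<lambda>z p. z *\<^sub>C resolvent (SA \<times> SD) Blk z p) (csector \<phi>)"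
      by (rule ub_blk[OF zr sect_ub[OF sA ltA \<phi>(2)] sect_ub[OF sD ltD \<phi>(2)] uN])
    have "\<exists>K. \<forall>z\<in>csector \<phi>. onorm (\<lambda>p. z *\<^sub>C resolvent (SA \<times> SD) Blk z p) \<le> K"
      by (rule ub_onorm[OF ub]) (rule bdd_op_compose[OF bdd_op_scale resolventD(1)[OF zB]])
    moreover have "spectrum_op (SA \<times> SD) Blk \<subseteq> closure (sector \<phi>)"
    proof
      fix z assume z: "z \<in> spectrum_op (SA \<times> SD) Blk"
      show "z \<in> closure (sector \<phi>)"
      proof (rule ccontr)
        assume "z \<notin> closure (sector \<phi>)"
        then have "z \<in> csector \<phi>" by (simp add: csector_def)
        then show False using zB z by (simp add: spectrum_op_def)
      qed
    qed
    moreover have "closure (SA \<times> SD) = UNIV" by (simp add: closure_Times A_dense D_dense)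
    moreover have "closure (Blk ` (SA \<times> SD)) = UNIV" by (simp add: surjB)
    moreover have "0 < \<phi>" using nnA psi \<phi> by auto
    ultimately show ?thesis using lin_Blk \<phi> unfolding sectorial_with_def by blast
  qed
  have sB: "sectorial (SA \<times> SD) Blk" unfolding sectorial_def using sw[OF \<phi>0] by blast
  have "sect_angle (SA \<times> SD) Blk \<le> \<psi>" unfolding sect_angle_def
  proof (rule Inf_le_interval)
    show "\<sigma> \<in> {\<omega>. sectorial_with (SA \<times> SD) Blk \<omega>}" if "\<psi> < \<sigma>" "\<sigma> < pi" for \<sigma> using sw that by blast
    show "bdd_below {\<omega>. sectorial_with (SA \<times> SD) Blk \<omega>}"
      by (rule bdd_belowI[of _ 0]) (simp add: sectorial_with_def)
  qed (rule psi(2))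
  then show ?thesis using sB iB by blast
qed

lemma a_M2:
  assumes sA: "sectorial SA A" and sD: "sectorial SD D"
    and psi: "max (sect_angle SA A) (sect_angle SD D) \<le> \<psi>" "\<psi> < pi"
    and H2: "\<forall>\<phi>. \<psi> < \<phi> \<and> \<phi> < pi \<longrightarrow>
             (\<forall>z\<in>csector \<phi> \<union> {0}. bdd_invertible UNIV (M2 SA A B C SD D z))
             \<and> (\<exists>K. \<forall>z\<in>csector \<phi>. onorm (inv (M2 SA A B C SD D z)) \<le> K)"
  shows "\<forall>\<phi>. \<psi> < \<phi> \<and> \<phi> < pi \<longrightarrow>
             (\<forall>z\<in>csector \<phi> \<union> {0}. bdd_invertible UNIV (M1 SA A B C SD D z))
             \<and> (\<exists>K. \<forall>z\<in>csector \<phi>. onorm (inv (M1 SA A B C SD D z)) \<le> K)"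
proof (intro allI impI)
  fix \<phi> assume \<phi>: "\<psi> < \<phi> \<and> \<phi> < pi"
  have ltA: "sect_angle SA A < \<phi>" and ltD: "sect_angle SD D < \<phi>" using psi \<phi> by auto
  have zr: "z \<in> resolvent_set SA A \<and> z \<in> resolvent_set SD D" if "z \<in> csector \<phi> \<union> {0}" for z
  proof (cases "z = 0")
    case True then show ?thesis using zero_res by simp
  next
    case False
    then have z: "z \<in> csector \<phi>" using that by simp
    show ?thesis using sect_res[OF sA ltA _ z] sect_res[OF sD ltD _ z] \<phi> by simp
  qed
  have sw: "bdd_invertible UNIV (M1 SA A B C SD D z)"
    "\<And>x. inv (M1 SA A B C SD D z) x = x + P z (inv (M2 SA A B C SD D z) (Q z x))"
    if "z \<in> csector \<phi> \<union> {0}" for z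
  proof -
    have "bdd_invertible UNIV (M2 SA A B C SD D z)" using H2 \<phi> that by blast
    then have "bdd_invertible UNIV (\<lambda>y. y - Q z (P z y))" by (simp add: M2_eq)
    note S = swap_inverse[OF bdd_P bdd_Q this]
    show "bdd_invertible UNIV (M1 SA A B C SD D z)" using S(1) zr[OF that] by (simp add: M1_eq)
    show "inv (M1 SA A B C SD D z) x = x + P z (inv (M2 SA A B C SD D z) (Q z x))" for x
      using S(2)[of x] zr[OF that] by (simp add: M1_eq M2_eq)
  qed
  have ZA: "csector \<phi> \<subseteq> resolvent_set SA A" and ZD: "csector \<phi> \<subseteq> resolvent_set SD D" using zr by auto
  obtain KN where KN: "\<forall>z\<in>csector \<phi>. onorm (inv (M2 SA A B C SD D z)) \<le> KN" using H2 \<phi> by blast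
  have uN: "ub (\<lambda>z. inv (M2 SA A B C SD D z)) (csector \<phi>)"
    by (rule onorm_ub) (use KN H2 \<phi> bdd_invertibleD(1) in blast)+
  have uP: "ub P (csector \<phi>)" by (rule ub_P[OF ZD sect_ub[OF sD ltD]]) (use \<phi> in simp)
  have uQ: "ub Q (csector \<phi>)" by (rule ub_Q[OF ZA sect_ub[OF sA ltA]]) (use \<phi> in simp)
  have "ub (\<lambda>z x. x + P z (inv (M2 SA A B C SD D z) (Q z x))) (csector \<phi>)"
    by (rule ub_add[OF ub_const[OF bounded_linear_ident] ub_comp[OF uP ub_comp[OF uN uQ]]])
  then have "ub (\<lambda>z. inv (M1 SA A B C SD D z)) (csector \<phi>)"
    by (rule ub_cong) (use sw in simp)
  then have "\<exists>K. \<forall>z\<in>csector \<phi>. onorm (inv (M1 SA A B C SD D z)) \<le> K"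
    by (rule ub_onorm) (use sw bdd_invertibleD(1) in blast)
  then show "(\<forall>z\<in>csector \<phi> \<union> {0}. bdd_invertible UNIV (M1 SA A B C SD D z))
             \<and> (\<exists>K. \<forall>z\<in>csector \<phi>. onorm (inv (M1 SA A B C SD D z)) \<le> K)" using sw by blast
qed

end

context blk_setting
begin

lemma b_fwd:
  assumes rA: "R_sectorial SA A" and rD: "R_sectorial SD D"
    and psi: "max (R_angle SA A) (R_angle SD D) \<le> \<psi>" "\<psi> < pi"
    and rB: "R_sectorial (SA \<times> SD) Blk" and iB: "bdd_invertible (SA \<times> SD) Blk"
    and aB: "R_angle (SA \<times> SD) Blk \<le> \<psi>"
  shows "\<forall>\<phi>. \<psi> < \<phi> \<and> \<phi> < pi \<longrightarrow>
             (\<forall>z\<in>csector \<phi> \<union> {0}. bdd_invertible UNIV (M1 SA A B C SD D z))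
             \<and> R_bounded {inv (M1 SA A B C SD D z) | z. z \<in> csector \<phi>}"
proof (intro allI impI)
  fix \<phi> assume \<phi>: "\<psi> < \<phi> \<and> \<phi> < pi"
  obtain T0 where T0: "bdd_op T0" "\<forall>p\<in>SA \<times> SD. A (fst p) = T0 (Blk p)"
    using T0_exists[OF iB] by blast
  have sA: "sectorial SA A" and sD: "sectorial SD D" and sB: "sectorial (SA \<times> SD) Blk"
    using rA rD rB by (auto intro: R_sectorial_sectorial)
  have lA: "R_angle SA A < \<phi>" and lD: "R_angle SD D < \<phi>" and lB: "R_angle (SA \<times> SD) Blk < \<phi>"
    using psi aB \<phi> by auto
  have ltA: "sect_angle SA A < \<phi>" by (rule Rsect(1)[OF rA lA]) (use \<phi> in simp)
  have ltD: "sect_angle SD D < \<phi>" by (rule Rsect(1)[OF rD lD]) (use \<phi> in simp)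
  have ltB: "sect_angle (SA \<times> SD) Blk < \<phi>" by (rule Rsect(1)[OF rB lB]) (use \<phi> in simp)
  have RB: "R_bounded {(\<lambda>y. z *\<^sub>C resolvent (SA \<times> SD) Blk z y) | z. z \<in> csector \<phi>}"
    by (rule Rsect(2)[OF rB lB]) (use \<phi> in simp)
  have zres: "z \<in> resolvent_set SA A \<and> z \<in> resolvent_set SD D \<and> z \<in> resolvent_set (SA \<times> SD) Blk"
    if "z \<in> csector \<phi> \<union> {0}" for z
  proof (cases "z = 0")
    case True then show ?thesis using zero_res iB by (simp add: res_zero_iff)
  next
    case False
    then have z: "z \<in> csector \<phi>" using that by simp
    show ?thesis using sect_res[OF sA ltA _ z] sect_res[OF sD ltD _ z] sect_res[OF sB ltB _ z] \<phi> by simp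
  qed
  have inv: "\<forall>z\<in>csector \<phi> \<union> {0}. bdd_invertible UNIV (M1 SA A B C SD D z)"
    using M1_inv_formula(1)[OF _ _ _ T0] zres by blast
  have "R_bounded {inv (M1 SA A B C SD D z) | z. z \<in> csector \<phi>}"
    by (rule R_M1inv[OF _ T0 RB]) (use zres in blast)
  with inv show "(\<forall>z\<in>csector \<phi> \<union> {0}. bdd_invertible UNIV (M1 SA A B C SD D z))
             \<and> R_bounded {inv (M1 SA A B C SD D z) | z. z \<in> csector \<phi>}" by blast
qed

lemma b_bwd:
  assumes rA: "R_sectorial SA A" and rD: "R_sectorial SD D"
    and psi: "max (R_angle SA A) (R_angle SD D) \<le> \<psi>" "\<psi> < pi"
    and H1R: "\<forall>\<phi>. \<psi> < \<phi> \<and> \<phi> < pi \<longrightarrow>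
             (\<forall>z\<in>csector \<phi> \<union> {0}. bdd_invertible UNIV (M1 SA A B C SD D z))
             \<and> R_bounded {inv (M1 SA A B C SD D z) | z. z \<in> csector \<phi>}"
  shows "R_sectorial (SA \<times> SD) Blk \<and> bdd_invertible (SA \<times> SD) Blk \<and> R_angle (SA \<times> SD) Blk \<le> \<psi>"
proof -
  have sA: "sectorial SA A" and sD: "sectorial SD D"
    using rA rD by (auto intro: R_sectorial_sectorial)
  have psi': "max (sect_angle SA A) (sect_angle SD D) \<le> \<psi>"
    using R_angle_ge[OF rA] R_angle_ge[OF rD] psi(1) by auto
  have H1: "\<forall>\<phi>. \<psi> < \<phi> \<and> \<phi> < pi \<longrightarrow>
             (\<forall>z\<in>csector \<phi> \<union> {0}. bdd_invertible UNIV (M1 SA A B C SD D z))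
             \<and> (\<exists>K. \<forall>z\<in>csector \<phi>. onorm (inv (M1 SA A B C SD D z)) \<le> K)"
  proof (intro allI impI conjI)
    fix \<phi> assume \<phi>: "\<psi> < \<phi> \<and> \<phi> < pi"
    show inv: "\<forall>z\<in>csector \<phi> \<union> {0}. bdd_invertible UNIV (M1 SA A B C SD D z)" using H1R \<phi> by blast
    have "ub (\<lambda>z. inv (M1 SA A B C SD D z)) (csector \<phi>)"
      by (rule R_bounded_ub) (use H1R \<phi> in blast)
    then show "\<exists>K. \<forall>z\<in>csector \<phi>. onorm (inv (M1 SA A B C SD D z)) \<le> K"
      by (rule ub_onorm) (use inv bdd_invertibleD(1) in blast)
  qed
  have aa: "sectorial (SA \<times> SD) Blk \<and> bdd_invertible (SA \<times> SD) Blk \<and> sect_angle (SA \<times> SD) Blk \<le> \<psi>"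
    by (rule a_bwd[OF sA sD psi' psi(2) H1])
  then have sB: "sectorial (SA \<times> SD) Blk" and iB: "bdd_invertible (SA \<times> SD) Blk"
    and aB: "sect_angle (SA \<times> SD) Blk \<le> \<psi>" by auto
  have rw: "R_sectorial_with (SA \<times> SD) Blk \<sigma>" if \<sigma>: "\<psi> < \<sigma>" "\<sigma> < pi" for \<sigma>
  proof -
    have lA: "R_angle SA A < \<sigma>" and lD: "R_angle SD D < \<sigma>" using psi \<sigma> by auto
    have ltA: "sect_angle SA A < \<sigma>" by (rule Rsect(1)[OF rA lA \<sigma>(2)])
    have ltD: "sect_angle SD D < \<sigma>" by (rule Rsect(1)[OF rD lD \<sigma>(2)])
    have zr: "z \<in> resolvent_set SA A \<and> z \<in> resolvent_set SD D \<and> bdd_invertible UNIV (M1 SA A B C SD D z)"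
      if "z \<in> csector \<sigma>" for z
      using sect_res[OF sA ltA \<sigma>(2) that] sect_res[OF sD ltD \<sigma>(2) that] H1R \<sigma> that by blast
    have uN: "R_bounded {inv (M1 SA A B C SD D z) | z. z \<in> csector \<sigma>}" using H1R \<sigma> by blast
    have "R_bounded {(\<lambda>p. z *\<^sub>C resolvent (SA \<times> SD) Blk z p) | z. z \<in> csector \<sigma>}"
      by (rule R_blk[OF zr Rsect(2)[OF rA lA \<sigma>(2)] Rsect(2)[OF rD lD \<sigma>(2)] uN])
    then show ?thesis unfolding R_sectorial_with_def using sB aB \<sigma> by auto
  qed
  define \<sigma>0 where "\<sigma>0 = (\<psi> + pi) / 2"
  have \<sigma>0: "\<psi> < \<sigma>0" "\<sigma>0 < pi" using psi(2) by (auto simp: \<sigma>0_def)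
  have rB: "R_sectorial (SA \<times> SD) Blk" unfolding R_sectorial_def using rw[OF \<sigma>0] by blast
  have "R_angle (SA \<times> SD) Blk \<le> \<psi>" unfolding R_angle_def
  proof (rule Inf_le_interval)
    show "\<sigma> \<in> {\<sigma>. R_sectorial_with (SA \<times> SD) Blk \<sigma>}" if "\<psi> < \<sigma>" "\<sigma> < pi" for \<sigma> using rw that by blast
    show "bdd_below {\<sigma>. R_sectorial_with (SA \<times> SD) Blk \<sigma>}" by (rule R_angle_bdd[OF sB])
  qed (rule psi(2))
  then show ?thesis using rB iB by blast
qed

lemma b_M2:
  assumes rA: "R_sectorial SA A" and rD: "R_sectorial SD D"
    and psi: "max (R_angle SA A) (R_angle SD D) \<le> \<psi>" "\<psi> < pi"
    and H2: "\<forall>\<phi>. \<psi> < \<phi> \<and> \<phi> < pi \<longrightarrow>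
             (\<forall>z\<in>csector \<phi> \<union> {0}. bdd_invertible UNIV (M2 SA A B C SD D z))
             \<and> R_bounded {inv (M2 SA A B C SD D z) | z. z \<in> csector \<phi>}"
  shows "\<forall>\<phi>. \<psi> < \<phi> \<and> \<phi> < pi \<longrightarrow>
             (\<forall>z\<in>csector \<phi> \<union> {0}. bdd_invertible UNIV (M1 SA A B C SD D z))
             \<and> R_bounded {inv (M1 SA A B C SD D z) | z. z \<in> csector \<phi>}"
proof (intro allI impI)
  fix \<phi> assume \<phi>: "\<psi> < \<phi> \<and> \<phi> < pi"
  have sA: "sectorial SA A" and sD: "sectorial SD D"
    using rA rD by (auto intro: R_sectorial_sectorial)
  have lA: "R_angle SA A < \<phi>" and lD: "R_angle SD D < \<phi>" using psi \<phi> by auto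
  have ltA: "sect_angle SA A < \<phi>" by (rule Rsect(1)[OF rA lA]) (use \<phi> in simp)
  have ltD: "sect_angle SD D < \<phi>" by (rule Rsect(1)[OF rD lD]) (use \<phi> in simp)
  have zr: "z \<in> resolvent_set SA A \<and> z \<in> resolvent_set SD D" if "z \<in> csector \<phi> \<union> {0}" for z
  proof (cases "z = 0")
    case True then show ?thesis using zero_res by simp
  next
    case False
    then have z: "z \<in> csector \<phi>" using that by simp
    show ?thesis using sect_res[OF sA ltA _ z] sect_res[OF sD ltD _ z] \<phi> by simp
  qed
  have sw: "bdd_invertible UNIV (M1 SA A B C SD D z)"
    "\<And>x. inv (M1 SA A B C SD D z) x = x + P z (inv (M2 SA A B C SD D z) (Q z x))"
    if "z \<in> csector \<phi> \<union> {0}" for z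
  proof -
    have "bdd_invertible UNIV (M2 SA A B C SD D z)" using H2 \<phi> that by blast
    then have "bdd_invertible UNIV (\<lambda>y. y - Q z (P z y))" by (simp add: M2_eq)
    note S = swap_inverse[OF bdd_P bdd_Q this]
    show "bdd_invertible UNIV (M1 SA A B C SD D z)" using S(1) zr[OF that] by (simp add: M1_eq)
    show "inv (M1 SA A B C SD D z) x = x + P z (inv (M2 SA A B C SD D z) (Q z x))" for x
      using S(2)[of x] zr[OF that] by (simp add: M1_eq M2_eq)
  qed
  have ZA: "csector \<phi> \<subseteq> resolvent_set SA A" and ZD: "csector \<phi> \<subseteq> resolvent_set SD D" using zr by auto
  have uN: "R_bounded {inv (M2 SA A B C SD D z) | z. z \<in> csector \<phi>}" using H2 \<phi> by blast
  have uP: "R_bounded {P z | z. z \<in> csector \<phi>}"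
    by (rule R_P[OF ZD Rsect(2)[OF rD lD]]) (use \<phi> in simp)
  have uQ: "R_bounded {Q z | z. z \<in> csector \<phi>}"
    by (rule R_Q[OF ZA Rsect(2)[OF rA lA]]) (use \<phi> in simp)
  have "R_bounded {(\<lambda>x. x + P z (inv (M2 SA A B C SD D z) (Q z x))) | z. z \<in> csector \<phi>}"
    by (rule R_bounded_add_idx[OF R_bounded_const_bdd[OF bdd_op_id]
          R_bounded_comp_idx[OF uP R_bounded_comp_idx[OF uN uQ]]])
  then have "R_bounded {inv (M1 SA A B C SD D z) | z. z \<in> csector \<phi>}"
    by (rule R_bounded_cong_idx) (use sw in simp)
  then show "(\<forall>z\<in>csector \<phi> \<union> {0}. bdd_invertible UNIV (M1 SA A B C SD D z))
             \<and> R_bounded {inv (M1 SA A B C SD D z) | z. z \<in> csector \<phi>}" using sw by blast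
qed

end

theorem corollary4p3:
  fixes SA :: "'a::{cplx_normed_vector, banach} set" and A :: "'a \<Rightarrow> 'a"
    and SD :: "'b::{cplx_normed_vector, banach} set" and D :: "'b \<Rightarrow> 'b"
    and SB :: "'b set" and B :: "'b \<Rightarrow> 'a"
    and SC :: "'a set" and C :: "'a \<Rightarrow> 'b"
    and cA cD L :: real
  assumes A_cl: "closed_op SA A" and A_dense: "closure SA = UNIV"
    and D_cl: "closed_op SD D" and D_dense: "closure SD = UNIV"
    and B_lin: "lin_op SB B" and C_lin: "lin_op SC C"
    and dom_D: "SD \<subseteq> SB" and dom_A: "SA \<subseteq> SC"
    and cA: "cA \<ge> 0" and cD: "cD \<ge> 0" and L: "L \<ge> 0"
    and C_rel: "\<forall>x\<in>SA. norm (C x) \<le> cA * norm (A x) + L * norm x"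
    and B_rel: "\<forall>y\<in>SD. norm (B y) \<le> cD * norm (D y) + L * norm y"
    and A_inv: "bdd_invertible SA A" and D_inv: "bdd_invertible SD D"
  shows
    "(sectorial SA A \<and> sectorial SD D \<longrightarrow>
      (\<forall>\<psi>. max (sect_angle SA A) (sect_angle SD D) \<le> \<psi> \<and> \<psi> < pi \<longrightarrow>
        ((sectorial (SA \<times> SD) (block_op A B C D)
            \<and> bdd_invertible (SA \<times> SD) (block_op A B C D)
            \<and> sect_angle (SA \<times> SD) (block_op A B C D) \<le> \<psi>)
         \<longleftrightarrow>
         ((\<forall>\<phi>. \<psi> < \<phi> \<and> \<phi> < pi \<longrightarrow>
             (\<forall>z\<in>csector \<phi> \<union> {0}. bdd_invertible UNIV (M1 SA A B C SD D z))
             \<and> (\<exists>K. \<forall>z\<in>csector \<phi>. onorm (inv (M1 SA A B C SD D z)) \<le> K))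
          \<or>
          (\<forall>\<phi>. \<psi> < \<phi> \<and> \<phi> < pi \<longrightarrow>
             (\<forall>z\<in>csector \<phi> \<union> {0}. bdd_invertible UNIV (M2 SA A B C SD D z))
             \<and> (\<exists>K. \<forall>z\<in>csector \<phi>. onorm (inv (M2 SA A B C SD D z)) \<le> K))))))
     \<and>
     (R_sectorial SA A \<and> R_sectorial SD D \<longrightarrow>
      (\<forall>\<psi>. max (R_angle SA A) (R_angle SD D) \<le> \<psi> \<and> \<psi> < pi \<longrightarrow>
        ((R_sectorial (SA \<times> SD) (block_op A B C D)
            \<and> bdd_invertible (SA \<times> SD) (block_op A B C D)
            \<and> R_angle (SA \<times> SD) (block_op A B C D) \<le> \<psi>)
         \<longleftrightarrow>
         ((\<forall>\<phi>. \<psi> < \<phi> \<and> \<phi> < pi \<longrightarrow>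
             (\<forall>z\<in>csector \<phi> \<union> {0}. bdd_invertible UNIV (M1 SA A B C SD D z))
             \<and> R_bounded {inv (M1 SA A B C SD D z) | z. z \<in> csector \<phi>})
          \<or>
          (\<forall>\<phi>. \<psi> < \<phi> \<and> \<phi> < pi \<longrightarrow>
             (\<forall>z\<in>csector \<phi> \<union> {0}. bdd_invertible UNIV (M2 SA A B C SD D z))
             \<and> R_bounded {inv (M2 SA A B C SD D z) | z. z \<in> csector \<phi>})))))"
proof -
  interpret blk_setting SA A SD D SB B SC C cA cD L
    by (rule blk_setting.intro; fact)
  show ?thesis
    apply (rule conjI)
     apply (intro impI allI, elim conjE, rule iffI)
      apply (elim conjE, rule disjI1, rule a_fwd; assumption)
     apply (elim disjE)
      apply (rule a_bwd; assumption)
     apply (rule a_bwd, assumption+, rule a_M2; assumption)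
    apply (intro impI allI, elim conjE, rule iffI)
     apply (elim conjE, rule disjI1, rule b_fwd; assumption)
    apply (elim disjE)
     apply (rule b_bwd; assumption)
    apply (rule b_bwd, assumption+, rule b_M2; assumption)
    done
qed

end
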